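(* Let $\mathcal G$ be a finite connected groupoid and $\alpha=(S_g,\alpha_g)_{g\in\mathcal G}$ a unital group-type partial action of $\mathcal G$ on a commutative ring $S=\bigoplus_{y\in\mathcal G_0}S_y$, with $S_g=S1_g$ and $1_g\neq0$ for all $g$. Suppose $S$ is an $\alpha$-partial Galois extension of $R=S^{\alpha_{\mathcal G}}$. Let $\mathcal H\in\mathrm{wSub}_\alpha(\mathcal G)$ and $T=S^{\alpha_{\mathcal H}}$. Then (i) $T$ is $R$-separable and $\alpha$-strong, and (ii) $\mathcal G_T=\mathcal H$.
   Context: A groupoid is a small category with all morphisms invertible; $\mathcal G_0$ is its object set (identified with identity morphisms), $s(g),t(g)$ source and target, $\mathcal G(x,y)=\{g:s(g)=x,t(g)=y\}$, $\mathcal G(x)=\mathcal G(x,x)$; $gh$ defined iff $s(g)=t(h)$; connected means all $\mathcal G(x,y)\ne\emptyset$; connected components are full subgroupoids on classes of $x\sim y\iff\mathcal G(x,y)\neq\emptyset$; wide means containing all objects. A partial action $\alpha=(S_g,\alpha_g)_{g\in\mathcal G}$ on a ring $S$: for each $g$, $S_{t(g)}$ is an ideal of $S$, $S_g$ an ideal of $S_{t(g)}$, $\alpha_g:S_{g^{-1}}\to S_g$ a ring isomorphism; $\alpha_x=\mathrm{id}_{S_x}$; for composable $(g,h)$, $\alpha_h^{-1}(S_{g^{-1}}\cap S_h)\subseteq S_{(gh)^{-1}}$ and $\alpha_g\alpha_h(a)=\alpha_{gh}(a)$ there. Unital: $S_g=S1_g$, $1_g$ central idempotent. A partial action of a connected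 groupoid $\mathcal K$ on $A=\bigoplus_{y\in\mathcal K_0}A_y$ is group-type if there are $x\in\mathcal K_0$ and $\tau_y\in\mathcal K(x,y)$ ($\tau_x=x$) with $A_{\tau_y^{-1}}=A_x$, $A_{\tau_y}=A_y$ for all $y$; for non-connected $\mathcal K$, if each restriction to a connected component is group-type. For a subgroupoid $\mathcal H$, $\alpha_{\mathcal H}=(S_h,\alpha_h)_{h\in\mathcal H}$ acts on $\bigoplus_{z\in\mathcal H_0}S_z$; $\mathrm{wSub}_\alpha(\mathcal G)$ is the set of wide subgroupoids $\mathcal H$ with $\alpha_{\mathcal H}$ group-type. $S^{\alpha_{\mathcal K}}=\{a\in S:\alpha_k(a1_{k^{-1}})=a1_k\ \forall k\in\mathcal K\}$. $S$ is an $\alpha$-partial Galois extension of $R=S^{\alpha_{\mathcal G}}$ if there exist $m\ge1$, $a_i,b_i\in S$ with $\sum_{i=1}^m a_i\alpha_g(b_i1_{g^{-1}})=\delta_{z,g}1_z$ for all $z\in\mathcal G_0$, $g\in\mathcal G$ (i.e. $1_g$ if $g\in\mathcal G_0$, $0$ otherwise). For a subring $T$, $\mathcal G_T=\{g\in\mathcal G:\alpha_g(t1_{g^{-1}})=t1_g\ \forall t\in T\}$ and $\mathcal G(y)_{B}$ is defined likewise inside $\mathcal G(y)$ for $B\subseteq S_y$. $T$ is $R$-separable if the unital extension $R\subseteq T$ is separable (the multiplication $T\otimes_RT\to T$ splits as $T$-bimodules). For $y\in\mathcal G_0$, $T_y=T1_y$ is $\alpha_{\mathcal G(y,z)}$-strong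 if for any $g,h\in\mathcal G(y,z)$ with $g^{-1}h\notin\mathcal G(y)_{T_y}$ and any non-zero idempotent $e\in S_g\cup S_h$ there is $t_y\in T_y$ with $\alpha_g(t_y1_{g^{-1}})e\ne\alpha_h(t_y1_{h^{-1}})e$; $T$ is $\alpha$-strong if $T_y$ is $\alpha_{\mathcal G(y,z)}$-strong for all $y,z$. *)

theory Defs
  imports Main "HOL-Library.Poly_Mapping"
begin

section \<open>Groupoids (objects identified with identity morphisms)\<close>

record 'g groupoid =
  mor  :: "'g set"
  src  :: "'g \<Rightarrow> 'g"
  tgt  :: "'g \<Rightarrow> 'g"
  cmp  :: "'g \<Rightarrow> 'g \<Rightarrow> 'g"   (* cmp G g h = g h, defined iff src g = tgt h *)
  ginv :: "'g \<Rightarrow> 'g"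

definition objs :: "('g, 'm) groupoid_scheme \<Rightarrow> 'g set" where
  "objs G = {x \<in> mor G. src G x = x}"

definition hom :: "('g, 'm) groupoid_scheme \<Rightarrow> 'g \<Rightarrow> 'g \<Rightarrow> 'g set" where
  "hom G x y = {g \<in> mor G. src G g = x \<and> tgt G g = y}"

definition groupoid :: "('g, 'm) groupoid_scheme \<Rightarrow> bool" where
  "groupoid G \<longleftrightarrow>
    (\<forall>g\<in>mor G. src G g \<in> mor G \<and> tgt G g \<in> mor G \<and>
        src G (src G g) = src G g \<and> tgt G (src G g) = src G g \<and>
        src G (tgt G g) = tgt G g \<and> tgt G (tgt G g) = tgt G g) \<and>
    (\<forall>g\<in>mor G. \<forall>h\<in>mor G. src G g = tgt G h \<longrightarrow>
        cmp G g h \<in> mor G \<and> src G (cmp G g h) = src G h \<and> tgt G (cmp G g h) = tgt G g) \<and>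
    (\<forall>f\<in>mor G. \<forall>g\<in>mor G. \<forall>h\<in>mor G. src G f = tgt G g \<and> src G g = tgt G h \<longrightarrow>
        cmp G f (cmp G g h) = cmp G (cmp G f g) h) \<and>
    (\<forall>g\<in>mor G. cmp G (tgt G g) g = g \<and> cmp G g (src G g) = g) \<and>
    (\<forall>g\<in>mor G. ginv G g \<in> mor G \<and> src G (ginv G g) = tgt G g \<and> tgt G (ginv G g) = src G g \<and>
        cmp G (ginv G g) g = src G g \<and> cmp G g (ginv G g) = tgt G g)"

definition connected_groupoid :: "('g, 'm) groupoid_scheme \<Rightarrow> bool" where
  "connected_groupoid G \<longleftrightarrow> (\<forall>x\<in>objs G. \<forall>y\<in>objs G. hom G x y \<noteq> {})"

definition subgroupoid :: "'g set \<Rightarrow> ('g, 'm) groupoid_scheme \<Rightarrow> bool" where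
  "subgroupoid H G \<longleftrightarrow> H \<subseteq> mor G \<and>
    (\<forall>h\<in>H. src G h \<in> H \<and> tgt G h \<in> H \<and> ginv G h \<in> H) \<and>
    (\<forall>h\<in>H. \<forall>k\<in>H. src G h = tgt G k \<longrightarrow> cmp G h k \<in> H)"

definition wide :: "'g set \<Rightarrow> ('g, 'm) groupoid_scheme \<Rightarrow> bool" where
  "wide H G \<longleftrightarrow> objs G \<subseteq> H"

text \<open>The ideal S_g = S 1_g, where e g is the idempotent 1_g.\<close>
definition Sid :: "('g \<Rightarrow> 'a::comm_ring_1) \<Rightarrow> 'g \<Rightarrow> 'a set" where
  "Sid e g = {a * e g | a. True}"

definition unital_partial_action ::
  "('g, 'm) groupoid_scheme \<Rightarrow> ('g \<Rightarrow> 'a::comm_ring_1) \<Rightarrow> ('g \<Rightarrow> 'a \<Rightarrow> 'a) \<Rightarrow> bool" where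
  "unital_partial_action G e \<alpha> \<longleftrightarrow>
    (\<forall>g\<in>mor G. e g * e g = e g \<and> e g * e (tgt G g) = e g \<and>
       bij_betw (\<alpha> g) (Sid e (ginv G g)) (Sid e g) \<and>
       (\<forall>a\<in>Sid e (ginv G g). \<forall>b\<in>Sid e (ginv G g).
          \<alpha> g (a + b) = \<alpha> g a + \<alpha> g b \<and> \<alpha> g (a * b) = \<alpha> g a * \<alpha> g b)) \<and>
    (\<forall>x\<in>objs G. \<forall>a\<in>Sid e x. \<alpha> x a = a) \<and>
    (\<forall>g\<in>mor G. \<forall>h\<in>mor G. src G g = tgt G h \<longrightarrow>
       (\<forall>a\<in>Sid e (ginv G h). \<alpha> h a \<in> Sid e (ginv G g) \<inter> Sid e h \<longrightarrow>
          a \<in> Sid e (ginv G (cmp G g h)) \<and> \<alpha> g (\<alpha> h a) = \<alpha> (cmp G g h) a))"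

text \<open>S is the direct sum of the ideals S_y, y an object.\<close>
definition direct_sum_objs :: "('g, 'm) groupoid_scheme \<Rightarrow> ('g \<Rightarrow> 'a::comm_ring_1) \<Rightarrow> bool" where
  "direct_sum_objs G e \<longleftrightarrow>
    (\<forall>x\<in>objs G. \<forall>y\<in>objs G. x \<noteq> y \<longrightarrow> e x * e y = 0) \<and> (\<Sum>y\<in>objs G. e y) = 1"

text \<open>Group-type of the restriction of the action to the subgroupoid with morphism set H:
  the restriction to every connected component of H is group-type.\<close>
definition group_type :: "('g, 'm) groupoid_scheme \<Rightarrow> ('g \<Rightarrow> 'a::comm_ring_1) \<Rightarrow> 'g set \<Rightarrow> bool" where
  "group_type G e H \<longleftrightarrow>
    (\<forall>x0\<in>{x \<in> H. src G x = x}.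
       let C = {y. \<exists>h\<in>H. src G h = x0 \<and> tgt G h = y} in
       \<exists>x\<in>C. \<exists>\<tau>. \<tau> x = x \<and>
         (\<forall>y\<in>C. \<tau> y \<in> H \<and> src G (\<tau> y) = x \<and> tgt G (\<tau> y) = y \<and>
                 Sid e (ginv G (\<tau> y)) = Sid e x \<and> Sid e (\<tau> y) = Sid e y))"

definition wSub :: "('g, 'm) groupoid_scheme \<Rightarrow> ('g \<Rightarrow> 'a::comm_ring_1) \<Rightarrow> 'g set set" where
  "wSub G e = {H. subgroupoid H G \<and> wide H G \<and> group_type G e H}"

definition fixring :: "('g, 'm) groupoid_scheme \<Rightarrow> ('g \<Rightarrow> 'a::comm_ring_1) \<Rightarrow> ('g \<Rightarrow> 'a \<Rightarrow> 'a) \<Rightarrow> 'g set \<Rightarrow> 'a set" where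
  "fixring G e \<alpha> K = {a. \<forall>k\<in>K. \<alpha> k (a * e (ginv G k)) = a * e k}"

text \<open>Elements of K fixing every element of B (gives G_T and G(y)_B).\<close>
definition fixing :: "('g, 'm) groupoid_scheme \<Rightarrow> ('g \<Rightarrow> 'a::comm_ring_1) \<Rightarrow> ('g \<Rightarrow> 'a \<Rightarrow> 'a) \<Rightarrow> 'g set \<Rightarrow> 'a set \<Rightarrow> 'g set" where
  "fixing G e \<alpha> K B = {k \<in> K. \<forall>b\<in>B. \<alpha> k (b * e (ginv G k)) = b * e k}"

definition partial_galois :: "('g, 'm) groupoid_scheme \<Rightarrow> ('g \<Rightarrow> 'a::comm_ring_1) \<Rightarrow> ('g \<Rightarrow> 'a \<Rightarrow> 'a) \<Rightarrow> bool" where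
  "partial_galois G e \<alpha> \<longleftrightarrow>
    (\<exists>m::nat. m \<ge> 1 \<and> (\<exists>a b :: nat \<Rightarrow> 'a. \<forall>g\<in>mor G.
       (\<Sum>i<m. a i * \<alpha> g (b i * e (ginv G g))) = (if g \<in> objs G then e g else 0)))"

definition alpha_strong :: "('g, 'm) groupoid_scheme \<Rightarrow> ('g \<Rightarrow> 'a::comm_ring_1) \<Rightarrow> ('g \<Rightarrow> 'a \<Rightarrow> 'a) \<Rightarrow> 'a set \<Rightarrow> bool" where
  "alpha_strong G e \<alpha> T \<longleftrightarrow>
    (\<forall>y\<in>objs G. \<forall>z\<in>objs G. \<forall>g\<in>hom G y z. \<forall>h\<in>hom G y z.
       cmp G (ginv G g) h \<notin> fixing G e \<alpha> (hom G y y) {t * e y | t. t \<in> T} \<longrightarrow>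
       (\<forall>\<epsilon>. \<epsilon> * \<epsilon> = \<epsilon> \<and> \<epsilon> \<noteq> 0 \<and> \<epsilon> \<in> Sid e g \<union> Sid e h \<longrightarrow>
          (\<exists>ty\<in>{t * e y | t. t \<in> T}.
             \<alpha> g (ty * e (ginv G g)) * \<epsilon> \<noteq> \<alpha> h (ty * e (ginv G h)) * \<epsilon>)))"

text \<open>Free abelian group on pairs; T \<otimes>_R T is its quotient (restricted to T \<times> T)
  by the subgroup generated by the bilinearity / balancing relations.\<close>
type_synonym 'a ftens = "('a \<times> 'a) \<Rightarrow>\<^sub>0 int"

inductive_set tens_zero :: "'a::comm_ring_1 set \<Rightarrow> 'a set \<Rightarrow> 'a ftens set" for R T where
  tz0: "0 \<in> tens_zero R T"
| tzl: "x \<in> T \<Longrightarrow> x' \<in> T \<Longrightarrow> y \<in> T \<Longrightarrow>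
     Poly_Mapping.single (x + x', y) 1 - Poly_Mapping.single (x, y) 1 - Poly_Mapping.single (x', y) 1
       \<in> tens_zero R T"
| tzr: "x \<in> T \<Longrightarrow> y \<in> T \<Longrightarrow> y' \<in> T \<Longrightarrow>
     Poly_Mapping.single (x, y + y') 1 - Poly_Mapping.single (x, y) 1 - Poly_Mapping.single (x, y') 1
       \<in> tens_zero R T"
| tzb: "r \<in> R \<Longrightarrow> x \<in> T \<Longrightarrow> y \<in> T \<Longrightarrow>
     Poly_Mapping.single (r * x, y) 1 - Poly_Mapping.single (x, r * y) 1 \<in> tens_zero R T"
| tzd: "u \<in> tens_zero R T \<Longrightarrow> v \<in> tens_zero R T \<Longrightarrow> u - v \<in> tens_zero R T"

definition tens_eq :: "'a::comm_ring_1 set \<Rightarrow> 'a set \<Rightarrow> 'a ftens \<Rightarrow> 'a ftens \<Rightarrow> bool" where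
  "tens_eq R T u v \<longleftrightarrow> u - v \<in> tens_zero R T"

definition tens_mult :: "'a::comm_ring_1 ftens \<Rightarrow> 'a" where
  "tens_mult f = (\<Sum>p\<in>Poly_Mapping.keys f. of_int (Poly_Mapping.lookup f p) * (fst p * snd p))"

definition tens_lact :: "'a::comm_ring_1 \<Rightarrow> 'a ftens \<Rightarrow> 'a ftens" where
  "tens_lact t f = (\<Sum>p\<in>Poly_Mapping.keys f. Poly_Mapping.single (t * fst p, snd p) (Poly_Mapping.lookup f p))"

definition tens_ract :: "'a::comm_ring_1 ftens \<Rightarrow> 'a \<Rightarrow> 'a ftens" where
  "tens_ract f t = (\<Sum>p\<in>Poly_Mapping.keys f. Poly_Mapping.single (fst p, snd p * t) (Poly_Mapping.lookup f p))"

definition subring_of :: "'a::comm_ring_1 set \<Rightarrow> bool" where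
  "subring_of T \<longleftrightarrow> 1 \<in> T \<and> (\<forall>x\<in>T. \<forall>y\<in>T. x + y \<in> T \<and> x * y \<in> T \<and> - x \<in> T)"

text \<open>T is R-separable: R \<subseteq> T unital subrings and the multiplication map
  T \<otimes>_R T \<rightarrow> T has a T-bimodule section sigma.\<close>
definition separable_over :: "'a::comm_ring_1 set \<Rightarrow> 'a set \<Rightarrow> bool" where
  "separable_over R T \<longleftrightarrow> subring_of R \<and> subring_of T \<and> R \<subseteq> T \<and>
    (\<exists>\<sigma> :: 'a \<Rightarrow> 'a ftens. \<forall>t\<in>T.
       Poly_Mapping.keys (\<sigma> t) \<subseteq> T \<times> T \<and> tens_mult (\<sigma> t) = t \<and>
       (\<forall>u\<in>T. tens_eq R T (\<sigma> (t + u)) (\<sigma> t + \<sigma> u) \<and>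
               tens_eq R T (\<sigma> (t * u)) (tens_lact t (\<sigma> u)) \<and>
               tens_eq R T (\<sigma> (t * u)) (tens_ract (\<sigma> t) u)))"

end

theory Submission
  imports Defs
begin



locale GP = fixes G :: "('g,'m) groupoid_scheme" assumes gp: "groupoid G"
begin

lemma mor_src: "g \<in> mor G \<Longrightarrow> src G g \<in> mor G" using gp unfolding groupoid_def by blast
lemma mor_tgt: "g \<in> mor G \<Longrightarrow> tgt G g \<in> mor G" using gp unfolding groupoid_def by blast
lemma src_src[simp]: "g \<in> mor G \<Longrightarrow> src G (src G g) = src G g" using gp unfolding groupoid_def by blast
lemma tgt_src[simp]: "g \<in> mor G \<Longrightarrow> tgt G (src G g) = src G g" using gp unfolding groupoid_def by blast
lemma src_tgt[simp]: "g \<in> mor G \<Longrightarrow> src G (tgt G g) = tgt G g" using gp unfolding groupoid_def by blast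
lemma tgt_tgt[simp]: "g \<in> mor G \<Longrightarrow> tgt G (tgt G g) = tgt G g" using gp unfolding groupoid_def by blast
lemma cmp_mor: "g \<in> mor G \<Longrightarrow> h \<in> mor G \<Longrightarrow> src G g = tgt G h \<Longrightarrow> cmp G g h \<in> mor G"
  using gp unfolding groupoid_def by blast
lemma src_cmp[simp]: "g \<in> mor G \<Longrightarrow> h \<in> mor G \<Longrightarrow> src G g = tgt G h \<Longrightarrow> src G (cmp G g h) = src G h"
  using gp unfolding groupoid_def by blast
lemma tgt_cmp[simp]: "g \<in> mor G \<Longrightarrow> h \<in> mor G \<Longrightarrow> src G g = tgt G h \<Longrightarrow> tgt G (cmp G g h) = tgt G g"
  using gp unfolding groupoid_def by blast
lemma assoc: "f \<in> mor G \<Longrightarrow> g \<in> mor G \<Longrightarrow> h \<in> mor G \<Longrightarrow> src G f = tgt G g \<Longrightarrow> src G g = tgt G h \<Longrightarrow>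
   cmp G (cmp G f g) h = cmp G f (cmp G g h)"
proof -
  assume a: "f \<in> mor G" "g \<in> mor G" "h \<in> mor G" "src G f = tgt G g" "src G g = tgt G h"
  have "\<forall>f\<in>mor G. \<forall>g\<in>mor G. \<forall>h\<in>mor G. src G f = tgt G g \<and> src G g = tgt G h \<longrightarrow>
        cmp G f (cmp G g h) = cmp G (cmp G f g) h" using gp unfolding groupoid_def by blast
  then show ?thesis using a by simp
qed
lemma cmp_tgt_left[simp]: "g \<in> mor G \<Longrightarrow> cmp G (tgt G g) g = g" using gp unfolding groupoid_def by blast
lemma cmp_src_right[simp]: "g \<in> mor G \<Longrightarrow> cmp G g (src G g) = g" using gp unfolding groupoid_def by blast
lemma inv_mor: "g \<in> mor G \<Longrightarrow> ginv G g \<in> mor G" using gp unfolding groupoid_def by blast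
lemma src_inv[simp]: "g \<in> mor G \<Longrightarrow> src G (ginv G g) = tgt G g" using gp unfolding groupoid_def by blast
lemma tgt_inv[simp]: "g \<in> mor G \<Longrightarrow> tgt G (ginv G g) = src G g" using gp unfolding groupoid_def by blast
lemma inv_left[simp]: "g \<in> mor G \<Longrightarrow> cmp G (ginv G g) g = src G g" using gp unfolding groupoid_def by blast
lemma inv_right[simp]: "g \<in> mor G \<Longrightarrow> cmp G g (ginv G g) = tgt G g" using gp unfolding groupoid_def by blast

lemmas mors = mor_src mor_tgt cmp_mor inv_mor

lemma objs_iff: "z \<in> objs G \<longleftrightarrow> z \<in> mor G \<and> src G z = z" unfolding objs_def by auto
lemma obj_tgt: "z \<in> objs G \<Longrightarrow> tgt G z = z" unfolding objs_def by (metis (mono_tags) mem_Collect_eq tgt_src)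
lemma obj_mor: "z \<in> objs G \<Longrightarrow> z \<in> mor G" unfolding objs_def by auto
lemma obj_src: "z \<in> objs G \<Longrightarrow> src G z = z" unfolding objs_def by auto
lemma src_obj: "g \<in> mor G \<Longrightarrow> src G g \<in> objs G" unfolding objs_def by (auto simp: mor_src)
lemma tgt_obj: "g \<in> mor G \<Longrightarrow> tgt G g \<in> objs G" unfolding objs_def by (auto simp: mor_tgt)

lemma inv_unique:
  assumes "k \<in> mor G" "f \<in> mor G" "src G k = tgt G f" "cmp G k f = src G f"
  shows "k = ginv G f"
proof -
  have "k = cmp G k (cmp G f (ginv G f))" using assms by (metis cmp_src_right inv_right)
  also have "\<dots> = cmp G (cmp G k f) (ginv G f)" using assms assoc[of k f "ginv G f"] by (simp add: inv_mor)
  also have "\<dots> = ginv G f" using assms by (metis cmp_tgt_left inv_mor tgt_inv)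
  finally show ?thesis .
qed

lemma inv_inv[simp]: "g \<in> mor G \<Longrightarrow> ginv G (ginv G g) = g"
  by (metis inv_mor inv_right inv_unique src_inv tgt_inv)

lemma inv_obj[simp]: "z \<in> objs G \<Longrightarrow> ginv G z = z"
  by (metis inv_unique obj_mor obj_src obj_tgt cmp_src_right)

lemma cancel_left: "g \<in> mor G \<Longrightarrow> h \<in> mor G \<Longrightarrow> src G g = tgt G h \<Longrightarrow> cmp G (ginv G g) (cmp G g h) = h"
  by (metis assoc cmp_tgt_left inv_left inv_mor src_inv tgt_inv)

lemma cancel_left2: "g \<in> mor G \<Longrightarrow> h \<in> mor G \<Longrightarrow> tgt G g = tgt G h \<Longrightarrow> cmp G g (cmp G (ginv G g) h) = h"
  by (metis cancel_left inv_inv inv_mor src_inv)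

lemma inv_cmp:
  assumes "g \<in> mor G" "h \<in> mor G" "src G g = tgt G h"
  shows "ginv G (cmp G g h) = cmp G (ginv G h) (ginv G g)"
proof -
  have "cmp G (cmp G (ginv G h) (ginv G g)) (cmp G g h) = cmp G (ginv G h) (cmp G (cmp G (ginv G g) g) h)"
    using assms by (metis assoc cancel_left inv_left inv_mor src_inv tgt_inv src_cmp tgt_cmp cmp_mor cmp_tgt_left)
  also have "\<dots> = src G h" using assms by simp
  finally show ?thesis using assms
    by (intro inv_unique[symmetric]) (auto simp: mors)
qed

lemma cmp_obj_iff:
  assumes "l \<in> mor G" "k \<in> mor G" "tgt G l = tgt G k"
  shows "cmp G (ginv G l) k \<in> objs G \<longleftrightarrow> l = k"
proof
  assume o: "cmp G (ginv G l) k \<in> objs G"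
  have "cmp G (ginv G l) k = src G (cmp G (ginv G l) k)" using o obj_src by simp
  also have "\<dots> = src G k" using assms by (simp add: mors)
  finally have "ginv G l = ginv G k" using assms by (intro inv_unique) (auto simp: mors)
  then show "l = k" using assms by (metis inv_inv)
qed (use assms src_obj in simp)

lemma cmp_obj_inv:
  assumes "g \<in> mor G" "h \<in> mor G" "src G g = tgt G h" "cmp G g h \<in> objs G"
  shows "g = ginv G h"
proof -
  have "cmp G g h = src G h" using assms obj_src[OF assms(4)] by simp
  then show ?thesis using assms by (intro inv_unique) auto
qed

end


locale PA = GP G for G :: "('g,'m) groupoid_scheme" +
  fixes e :: "'g \<Rightarrow> 'a::comm_ring_1" and \<alpha> :: "'g \<Rightarrow> 'a \<Rightarrow> 'a"
  assumes upa: "unital_partial_action G e \<alpha>" and dsum: "direct_sum_objs G e"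
    and fin: "finite (mor G)"
begin

lemma idem[simp]: "g \<in> mor G \<Longrightarrow> e g * e g = e g" using upa unfolding unital_partial_action_def by blast
lemma idem2[simp]: "g \<in> mor G \<Longrightarrow> e g * (e g * x) = e g * x" by (metis idem mult.assoc)
lemma e_tgt[simp]: "g \<in> mor G \<Longrightarrow> e g * e (tgt G g) = e g" using upa unfolding unital_partial_action_def by blast
lemma bij: "g \<in> mor G \<Longrightarrow> bij_betw (\<alpha> g) (Sid e (ginv G g)) (Sid e g)"
  using upa unfolding unital_partial_action_def by blast
lemma hom_add: "g \<in> mor G \<Longrightarrow> a \<in> Sid e (ginv G g) \<Longrightarrow> b \<in> Sid e (ginv G g) \<Longrightarrow> \<alpha> g (a + b) = \<alpha> g a + \<alpha> g b"
  using upa unfolding unital_partial_action_def by blast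
lemma hom_mult: "g \<in> mor G \<Longrightarrow> a \<in> Sid e (ginv G g) \<Longrightarrow> b \<in> Sid e (ginv G g) \<Longrightarrow> \<alpha> g (a * b) = \<alpha> g a * \<alpha> g b"
  using upa unfolding unital_partial_action_def by blast
lemma obj_id: "x \<in> objs G \<Longrightarrow> a \<in> Sid e x \<Longrightarrow> \<alpha> x a = a"
  using upa unfolding unital_partial_action_def by blast
lemma comp_ax: "g \<in> mor G \<Longrightarrow> h \<in> mor G \<Longrightarrow> src G g = tgt G h \<Longrightarrow> a \<in> Sid e (ginv G h) \<Longrightarrow>
   \<alpha> h a \<in> Sid e (ginv G g) \<Longrightarrow> \<alpha> h a \<in> Sid e h \<Longrightarrow>
   a \<in> Sid e (ginv G (cmp G g h)) \<and> \<alpha> g (\<alpha> h a) = \<alpha> (cmp G g h) a"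
  using upa unfolding unital_partial_action_def by blast
lemma orth: "x \<in> objs G \<Longrightarrow> y \<in> objs G \<Longrightarrow> x \<noteq> y \<Longrightarrow> e x * e y = 0"
  using dsum unfolding direct_sum_objs_def by blast
lemma sum_one: "(\<Sum>y\<in>objs G. e y) = 1"
  using dsum unfolding direct_sum_objs_def by blast
lemma fin_objs: "finite (objs G)" using fin unfolding objs_def by simp

lemma Sid_iff: "g \<in> mor G \<Longrightarrow> y \<in> Sid e g \<longleftrightarrow> y * e g = y"
  unfolding Sid_def by (auto simp: mult.assoc) (metis)

lemma e_orth: "g \<in> mor G \<Longrightarrow> h \<in> mor G \<Longrightarrow> tgt G g \<noteq> tgt G h \<Longrightarrow> e g * e h = 0"
proof -
  assume a: "g \<in> mor G" "h \<in> mor G" "tgt G g \<noteq> tgt G h"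
  have "e g * e h = (e g * e (tgt G g)) * (e h * e (tgt G h))" using a by simp
  also have "\<dots> = e g * e h * (e (tgt G g) * e (tgt G h))" by (simp add: ac_simps)
  also have "\<dots> = 0" using a orth tgt_obj by simp
  finally show ?thesis .
qed

lemma e_inv_src[simp]: "g \<in> mor G \<Longrightarrow> e (ginv G g) * e (src G g) = e (ginv G g)"
  using e_tgt[of "ginv G g"] by (simp add: inv_mor)

lemma alpha_range: "g \<in> mor G \<Longrightarrow> a \<in> Sid e (ginv G g) \<Longrightarrow> \<alpha> g a \<in> Sid e g"
  by (rule bij_betw_apply[OF bij])

lemma alpha_zero: "g \<in> mor G \<Longrightarrow> \<alpha> g 0 = 0"
proof -
  assume g: "g \<in> mor G"
  have z: "0 \<in> Sid e (ginv G g)" using g by (simp add: Sid_iff inv_mor)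
  have "\<alpha> g (0 + 0) = \<alpha> g 0 + \<alpha> g 0" using hom_add[OF g z z] .
  then show ?thesis by simp
qed

lemma alpha_one: "g \<in> mor G \<Longrightarrow> \<alpha> g (e (ginv G g)) = e g"
proof -
  assume g: "g \<in> mor G"
  have eg: "e g \<in> Sid e g" using g by (simp add: Sid_iff)
  have "e g \<in> \<alpha> g ` Sid e (ginv G g)" using bij[OF g] eg by (simp add: bij_betw_def)
  then obtain b where b: "b \<in> Sid e (ginv G g)" "\<alpha> g b = e g" by (metis imageE)
  have o: "e (ginv G g) \<in> Sid e (ginv G g)" using g by (simp add: Sid_iff inv_mor)
  have "\<alpha> g (e (ginv G g)) * e g = \<alpha> g (e (ginv G g) * b)"
    using hom_mult[OF g o b(1)] b(2) by simp
  also have "e (ginv G g) * b = b" using b(1) g by (simp add: Sid_iff inv_mor mult.commute)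
  finally have "\<alpha> g (e (ginv G g)) * e g = e g" using b by simp
  moreover have "\<alpha> g (e (ginv G g)) * e g = \<alpha> g (e (ginv G g))"
    using alpha_range[OF g o] g by (simp add: Sid_iff)
  ultimately show ?thesis by simp
qed

lemma alpha_inv: "g \<in> mor G \<Longrightarrow> a \<in> Sid e (ginv G g) \<Longrightarrow> \<alpha> (ginv G g) (\<alpha> g a) = a"
proof -
  assume g: "g \<in> mor G" and a: "a \<in> Sid e (ginv G g)"
  have r: "\<alpha> g a \<in> Sid e g" using alpha_range[OF g a] .
  have "\<alpha> (ginv G g) (\<alpha> g a) = \<alpha> (cmp G (ginv G g) g) a"
    using comp_ax[of "ginv G g" g a] g a r by (simp add: inv_mor)
  also have "\<dots> = \<alpha> (src G g) a" using g by simp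
  also have "\<dots> = a"
  proof (rule obj_id)
    show "src G g \<in> objs G" using g src_obj by blast
    have "a * e (src G g) = a * e (ginv G g) * e (src G g)" using a g by (simp add: Sid_iff inv_mor)
    also have "\<dots> = a" using a g e_inv_src[OF g] by (metis Sid_iff inv_mor mult.assoc)
    finally show "a \<in> Sid e (src G g)" using g by (simp add: Sid_iff mor_src)
  qed
  finally show ?thesis .
qed

lemma alpha_inv2: "g \<in> mor G \<Longrightarrow> a \<in> Sid e g \<Longrightarrow> \<alpha> g (\<alpha> (ginv G g) a) = a"
  using alpha_inv[of "ginv G g" a] by (simp add: inv_mor)

lemma Sid_e: "g \<in> mor G \<Longrightarrow> e g \<in> Sid e g" by (simp add: Sid_iff)
lemma Sid_mult: "g \<in> mor G \<Longrightarrow> y \<in> Sid e g \<Longrightarrow> x * y \<in> Sid e g"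
  by (simp add: Sid_iff mult.assoc)

lemma alpha_idem_comp:
  assumes g: "g \<in> mor G" and h: "h \<in> mor G" and gh: "src G g = tgt G h"
  shows "\<alpha> h (e (ginv G h) * e (ginv G (cmp G g h))) = e h * e (ginv G g)"
proof -
  define k where "k = ginv G (cmp G g h)"
  have ghm: "cmp G g h \<in> mor G" using g h gh by (rule cmp_mor)
  have km: "k \<in> mor G" unfolding k_def using ghm by (rule inv_mor)
  have ik: "ginv G k = cmp G g h" unfolding k_def using ghm by simp
  have hk: "src G h = tgt G k" unfolding k_def using ghm g h gh by simp
  have chk: "cmp G h k = ginv G g"
    unfolding k_def using g h gh by (simp add: inv_cmp cancel_left2 inv_mor)
  have hi: "ginv G h \<in> mor G" "ginv G g \<in> mor G" using g h by (auto intro: inv_mor)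
  have stepa: "\<alpha> h b \<in> Sid e (ginv G g)" if b1: "b \<in> Sid e (ginv G h)" and b2: "b \<in> Sid e k" for b
  proof -
    define a' where "a' = \<alpha> (cmp G g h) b"
    have a'S: "a' \<in> Sid e (cmp G g h)" unfolding a'_def using alpha_range[OF ghm] b2 k_def by simp
    have ka: "\<alpha> k a' = b" unfolding a'_def k_def using alpha_inv[OF ghm] b2 k_def by simp
    have c: "a' \<in> Sid e (ginv G (cmp G h k)) \<and> \<alpha> h (\<alpha> k a') = \<alpha> (cmp G h k) a'"
      using comp_ax[OF h km hk, of a'] a'S ik ka b1 b2 by simp
    then have "\<alpha> h b = \<alpha> (ginv G g) a'" using ka chk by simp
    moreover have "a' \<in> Sid e (ginv G (ginv G g))" using c chk by simp
    ultimately show ?thesis using alpha_range[OF hi(2)] by simp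
  qed
  define f where "f = \<alpha> h (e (ginv G h) * e k)"
  have bS1: "e (ginv G h) * e k \<in> Sid e (ginv G h)" using hi km by (simp add: Sid_iff ac_simps)
  have bS2: "e (ginv G h) * e k \<in> Sid e k" using hi km by (simp add: Sid_iff ac_simps)
  have f1: "f * e (ginv G g) = f" using stepa[OF bS1 bS2] hi unfolding f_def by (simp add: Sid_iff)
  have f2: "f * e h = f" using alpha_range[OF h bS1] h unfolding f_def by (simp add: Sid_iff)
  define y where "y = e h * e (ginv G g)"
  have yh: "y \<in> Sid e h" unfolding y_def using h by (simp add: Sid_iff ac_simps)
  have yg: "y \<in> Sid e (ginv G g)" unfolding y_def using hi by (simp add: Sid_iff ac_simps)
  define b' where "b' = \<alpha> (ginv G h) y"
  have b'S: "b' \<in> Sid e (ginv G h)" unfolding b'_def using alpha_range[OF hi(1)] yh h by simp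
  have hb': "\<alpha> h b' = y" unfolding b'_def using alpha_inv2[OF h yh] .
  have "b' \<in> Sid e (ginv G (cmp G g h))" using comp_ax[OF g h gh b'S] hb' yh yg by simp
  then have b'k: "b' * e k = b'" using km k_def by (simp add: Sid_iff)
  have b'h: "b' * e (ginv G h) = b'" using b'S hi by (simp add: Sid_iff)
  have "b' * (e (ginv G h) * e k) = b'" using b'k b'h by (metis mult.assoc)
  then have "y = \<alpha> h b' * f" unfolding f_def using hom_mult[OF h b'S bS1] hb' by simp
  then have "y = y * f" using hb' by simp
  also have "\<dots> = f" unfolding y_def using f1 f2 by (metis mult.assoc mult.commute)
  finally show ?thesis unfolding f_def y_def k_def by simp
qed

definition bt :: "'g \<Rightarrow> 'a \<Rightarrow> 'a" where "bt g x = \<alpha> g (x * e (ginv G g))"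

lemma bt_range: "g \<in> mor G \<Longrightarrow> bt g x * e g = bt g x"
  unfolding bt_def using alpha_range[of g "x * e (ginv G g)"] by (simp add: Sid_iff inv_mor mult.assoc)

lemma bt_add: "g \<in> mor G \<Longrightarrow> bt g (x + y) = bt g x + bt g y"
  unfolding bt_def using hom_add[of g "x * e (ginv G g)" "y * e (ginv G g)"]
  by (simp add: Sid_iff inv_mor mult.assoc distrib_right)

lemma bt_mult: "g \<in> mor G \<Longrightarrow> bt g (x * y) = bt g x * bt g y"
proof -
  assume g: "g \<in> mor G"
  have "x * y * e (ginv G g) = (x * e (ginv G g)) * (y * e (ginv G g))"
  proof -
    have "(x * e (ginv G g)) * (y * e (ginv G g)) = x * y * (e (ginv G g) * e (ginv G g))" by (simp add: ac_simps)
    then show ?thesis using g by (simp add: inv_mor)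
  qed
  then show ?thesis unfolding bt_def using hom_mult[of g "x * e (ginv G g)" "y * e (ginv G g)"] g
    by (simp add: Sid_iff inv_mor mult.assoc)
qed

lemma bt_zero[simp]: "g \<in> mor G \<Longrightarrow> bt g 0 = 0" unfolding bt_def by (simp add: alpha_zero)

lemma bt_uminus: "g \<in> mor G \<Longrightarrow> bt g (- x) = - bt g x"
  using bt_add[of g x "- x"] by (simp add: eq_neg_iff_add_eq_0 add.commute)

lemma bt_diff: "g \<in> mor G \<Longrightarrow> bt g (x - y) = bt g x - bt g y"
  using bt_add[of g x "- y"] bt_uminus[of g y] by simp

lemma bt_sum: "g \<in> mor G \<Longrightarrow> bt g (\<Sum>i\<in>A. f i) = (\<Sum>i\<in>A. bt g (f i))"
  by (induction A rule: infinite_finite_induct) (auto simp: bt_add)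

lemma bt_one: "g \<in> mor G \<Longrightarrow> bt g 1 = e g" unfolding bt_def by (simp add: alpha_one)

lemma bt_obj: "z \<in> objs G \<Longrightarrow> bt z x = x * e z"
  unfolding bt_def using obj_id[of z "x * e z"] obj_mor[of z] by (simp add: Sid_iff mult.assoc)

lemma bt_e: "g \<in> mor G \<Longrightarrow> bt g (x * e (ginv G g)) = bt g x"
  unfolding bt_def using inv_mor[of g] by (simp add: mult.assoc)

lemma bt_e_src: "g \<in> mor G \<Longrightarrow> bt g (x * e (src G g)) = bt g x"
  unfolding bt_def using e_inv_src[of g] by (simp add: mult.assoc mult.commute[of "e (src G g)"])

lemma bt_noncomp: "g \<in> mor G \<Longrightarrow> h \<in> mor G \<Longrightarrow> src G g \<noteq> tgt G h \<Longrightarrow> bt g (bt h x) = 0"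
proof -
  assume g: "g \<in> mor G" and h: "h \<in> mor G" and n: "src G g \<noteq> tgt G h"
  have "bt h x * e (ginv G g) = bt h x * (e h * e (ginv G g))" using bt_range[OF h] by (metis mult.assoc)
  also have "e h * e (ginv G g) = 0" using e_orth[OF h inv_mor[OF g]] n g by auto
  finally show ?thesis unfolding bt_def using g by (simp add: alpha_zero)
qed

lemma bt_comp:
  assumes g: "g \<in> mor G" and h: "h \<in> mor G" and gh: "src G g = tgt G h"
  shows "bt g (bt h x) = bt (cmp G g h) x * e g"
proof -
  define k where "k = ginv G (cmp G g h)"
  have ghm: "cmp G g h \<in> mor G" using g h gh by (rule cmp_mor)
  have km: "k \<in> mor G" unfolding k_def using ghm by (rule inv_mor)
  have hi: "ginv G h \<in> mor G" "ginv G g \<in> mor G" using g h by (auto intro: inv_mor)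
  define b where "b = x * e (ginv G h) * e k"
  have bS: "b \<in> Sid e (ginv G h)" unfolding b_def using hi by (simp add: Sid_iff) (metis idem mult.assoc mult.commute)
  have ebS: "e (ginv G h) * e k \<in> Sid e (ginv G h)" using hi by (simp add: Sid_iff ac_simps)
  have xS: "x * e (ginv G h) \<in> Sid e (ginv G h)" using hi by (simp add: Sid_iff ac_simps)
  have "bt h x * e (ginv G g) = bt h x * (e h * e (ginv G g))" using bt_range[OF h] by (metis mult.assoc)
  also have "\<dots> = \<alpha> h (x * e (ginv G h)) * \<alpha> h (e (ginv G h) * e k)"
    unfolding bt_def k_def using alpha_idem_comp[OF g h gh] by simp
  also have "\<dots> = \<alpha> h b" unfolding b_def using hom_mult[OF h xS ebS] hi
    by (simp add: ac_simps)
  finally have eq1: "bt h x * e (ginv G g) = \<alpha> h b" .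
  have r1: "\<alpha> h b \<in> Sid e (ginv G g)" using eq1[symmetric] hi by (simp add: Sid_iff mult.assoc)
  have r2: "\<alpha> h b \<in> Sid e h" using alpha_range[OF h bS] .
  have "bt g (bt h x) = \<alpha> g (\<alpha> h b)" using eq1 by (simp add: bt_def[of g])
  also have "\<dots> = \<alpha> (cmp G g h) b" using comp_ax[OF g h gh bS r1 r2] by simp
  also have "\<dots> = \<alpha> (cmp G g h) ((x * e k) * (e k * e (ginv G h)))"
    unfolding b_def using km by (metis (no_types, lifting) idem mult.assoc mult.commute)
  also have "\<dots> = bt (cmp G g h) x * \<alpha> (cmp G g h) (e k * e (ginv G h))"
  proof -
    have m1: "x * e k \<in> Sid e (ginv G (cmp G g h))" using km k_def by (simp add: Sid_iff ac_simps)
    have m2: "e k * e (ginv G h) \<in> Sid e (ginv G (cmp G g h))" using km k_def by (simp add: Sid_iff ac_simps)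
    show ?thesis using hom_mult[OF ghm m1 m2] by (simp add: bt_def k_def)
  qed
  also have "\<alpha> (cmp G g h) (e k * e (ginv G h)) = e (cmp G g h) * e g"
  proof -
    have c: "cmp G (ginv G g) (cmp G g h) = h" using g h gh by (rule cancel_left)
    have "src G (ginv G g) = tgt G (cmp G g h)" using g h gh by simp
    from alpha_idem_comp[OF hi(2) ghm this] show ?thesis using c g k_def by simp
  qed
  finally show ?thesis using bt_range[OF ghm] by (metis mult.assoc)
qed

lemma bt_inv_bt: "g \<in> mor G \<Longrightarrow> bt (ginv G g) (bt g x) = x * e (ginv G g)"
proof -
  assume g: "g \<in> mor G"
  have "bt (ginv G g) (bt g x) = bt (src G g) x * e (ginv G g)"
    using bt_comp[of "ginv G g" g x] g by (simp add: inv_mor)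
  also have "\<dots> = x * e (ginv G g)" using g bt_obj[OF src_obj[OF g]] e_inv_src[OF g]
    by (metis mult.assoc mult.commute)
  finally show ?thesis .
qed

lemma bt_move: "g \<in> mor G \<Longrightarrow> bt g x * y = bt g (x * bt (ginv G g) y)"
proof -
  assume g: "g \<in> mor G"
  have "bt g (bt (ginv G g) y) = y * e g" using bt_inv_bt[OF inv_mor[OF g]] g by simp
  then have "bt g (x * bt (ginv G g) y) = bt g x * (y * e g)" using bt_mult[OF g] by simp
  also have "\<dots> = bt g x * y" using bt_range[OF g] by (metis mult.assoc mult.commute)
  finally show ?thesis by simp
qed

end




context PA begin
lemma e_src_inv[simp]: "g \<in> mor G \<Longrightarrow> e (src G g) * e (ginv G g) = e (ginv G g)"
  using e_inv_src by (simp add: mult.commute)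
lemma fixring_iff: "a \<in> fixring G e \<alpha> K \<longleftrightarrow> (\<forall>k\<in>K. bt k a = a * e k)"
  unfolding fixring_def bt_def by simp

definition tr :: "'g set \<Rightarrow> 'a \<Rightarrow> 'a" where "tr K s = (\<Sum>h\<in>K. bt h s)"

lemma e_mult_orth: "g \<in> mor G \<Longrightarrow> h \<in> mor G \<Longrightarrow> tgt G g \<noteq> tgt G h \<Longrightarrow> bt g u * bt h v = 0"
proof -
  assume a: "g \<in> mor G" "h \<in> mor G" "tgt G g \<noteq> tgt G h"
  have "bt g u * bt h v = (bt g u * e g) * (bt h v * e h)"
    using bt_range[OF a(1), of u] bt_range[OF a(2), of v] by simp
  also have "\<dots> = (bt g u * bt h v) * (e g * e h)" by (simp add: ac_simps)
  finally show ?thesis using e_orth[OF a] by simp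
qed

lemma bt_e_orth: "g \<in> mor G \<Longrightarrow> h \<in> mor G \<Longrightarrow> tgt G g \<noteq> tgt G h \<Longrightarrow> bt g u * e h = 0"
  using e_mult_orth[of g h u 1] by (simp add: bt_one)

lemma tr_fix:
  assumes K: "subgroupoid K G"
  shows "tr K s \<in> fixring G e \<alpha> K"
  unfolding fixring_iff
proof
  fix k assume k: "k \<in> K"
  have Km: "K \<subseteq> mor G" using K unfolding subgroupoid_def by blast
  have finK: "finite K" using Km fin finite_subset by blast
  have km: "k \<in> mor G" using k Km by blast
  have Kc: "\<And>h1 h2. h1 \<in> K \<Longrightarrow> h2 \<in> K \<Longrightarrow> src G h1 = tgt G h2 \<Longrightarrow> cmp G h1 h2 \<in> K"
    and Ki: "\<And>h. h \<in> K \<Longrightarrow> ginv G h \<in> K" using K unfolding subgroupoid_def by blast+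
  have "bt k (tr K s) = (\<Sum>h\<in>K. bt k (bt h s))" unfolding tr_def by (simp add: bt_sum km)
  also have "\<dots> = (\<Sum>h\<in>{h\<in>K. tgt G h = src G k}. bt k (bt h s))"
    by (rule sum.mono_neutral_right[OF finK]) (use Km km in \<open>auto intro!: bt_noncomp\<close>)
  also have "\<dots> = (\<Sum>h\<in>{h\<in>K. tgt G h = src G k}. bt (cmp G k h) s * e k)"
    by (rule sum.cong) (use Km km bt_comp in auto)
  also have "\<dots> = (\<Sum>h\<in>{h\<in>K. tgt G h = tgt G k}. bt h s * e k)"
  proof (rule sum.reindex_bij_witness[where i = "\<lambda>h. cmp G (ginv G k) h" and j = "\<lambda>h. cmp G k h"])
    fix a assume a: "a \<in> {h \<in> K. tgt G h = tgt G k}"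
    then have am: "a \<in> mor G" using Km by blast
    show "cmp G k (cmp G (ginv G k) a) = a" using cancel_left2[OF km am] a by simp
    show "cmp G (ginv G k) a \<in> {h \<in> K. tgt G h = src G k}"
      using a am km Kc[OF Ki[OF k], of a] by (simp add: inv_mor)
  next
    fix a assume a: "a \<in> {h \<in> K. tgt G h = src G k}"
    then have am: "a \<in> mor G" using Km by blast
    show "cmp G (ginv G k) (cmp G k a) = a" using cancel_left[OF km am] a by simp
    show "cmp G k a \<in> {h \<in> K. tgt G h = tgt G k}" using a am km Kc[OF k, of a] by simp
    show "bt (cmp G k a) s * e k = bt (cmp G k a) s * e k" ..
  qed
  also have "\<dots> = (\<Sum>h\<in>K. bt h s * e k)"
    by (rule sum.mono_neutral_left[OF finK]) (use Km km in \<open>auto intro!: bt_e_orth\<close>)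
  also have "\<dots> = tr K s * e k" unfolding tr_def by (simp add: sum_distrib_right)
  finally show "bt k (tr K s) = tr K s * e k" .
qed

lemma tr_linear:
  assumes "K \<subseteq> mor G" "t \<in> fixring G e \<alpha> K"
  shows "tr K (t * s) = t * tr K s"
proof -
  have "bt h (t * s) = t * bt h s" if "h \<in> K" for h
  proof -
    have hm: "h \<in> mor G" using that assms by blast
    have "bt h (t * s) = t * e h * bt h s" using assms that hm by (simp add: bt_mult fixring_iff)
    also have "\<dots> = t * bt h s" using bt_range[OF hm, of s] by (simp add: ac_simps)
    finally show ?thesis .
  qed
  then show ?thesis unfolding tr_def by (simp add: sum_distrib_left)
qed

lemma tr_add: "K \<subseteq> mor G \<Longrightarrow> tr K (a + b) = tr K a + tr K b"
  unfolding tr_def by (simp add: sum.distrib bt_add subset_iff)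

lemma tr_sum: "K \<subseteq> mor G \<Longrightarrow> tr K (\<Sum>i\<in>A. f i) = (\<Sum>i\<in>A. tr K (f i))"
proof -
  assume K: "K \<subseteq> mor G"
  have z: "tr K 0 = 0" unfolding tr_def using K by (auto intro!: sum.neutral)
  show ?thesis by (induction A rule: infinite_finite_induct) (auto simp: tr_add[OF K] z)
qed

lemma fixring_subring: "K \<subseteq> mor G \<Longrightarrow> subring_of (fixring G e \<alpha> K)"
proof -
  assume K: "K \<subseteq> mor G"
  have km: "k \<in> K \<Longrightarrow> k \<in> mor G" for k using K by blast
  have "bt k (a * b) = a * b * e k" if "k \<in> K" "bt k a = a * e k" "bt k b = b * e k" for k a b
  proof -
    have "bt k (a * b) = (a * b) * (e k * e k)" using that km[OF that(1)] by (simp add: bt_mult ac_simps)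
    then show ?thesis using km[OF that(1)] by simp
  qed
  then show ?thesis unfolding subring_of_def fixring_iff
    by (auto simp: km bt_one bt_add bt_uminus distrib_right fixring_iff)
qed

end

locale PG = PA G e \<alpha> for G :: "('g,'m) groupoid_scheme" and e :: "'g \<Rightarrow> 'a::comm_ring_1" and \<alpha> +
  fixes m :: nat and x y :: "nat \<Rightarrow> 'a" and H :: "'g set"
  assumes gal: "\<And>g. g \<in> mor G \<Longrightarrow> (\<Sum>i<m. x i * bt g (y i)) = (if g \<in> objs G then e g else 0)"
    and nz: "\<And>g. g \<in> mor G \<Longrightarrow> e g \<noteq> 0"
    and Hsub: "subgroupoid H G" and Hwide: "wide H G"
begin

lemma Hm: "H \<subseteq> mor G" using Hsub unfolding subgroupoid_def by blast
lemma finH: "finite H" using Hm fin finite_subset by blast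
lemma Hc: "h1 \<in> H \<Longrightarrow> h2 \<in> H \<Longrightarrow> src G h1 = tgt G h2 \<Longrightarrow> cmp G h1 h2 \<in> H"
  using Hsub unfolding subgroupoid_def by blast
lemma Hi: "h \<in> H \<Longrightarrow> ginv G h \<in> H" using Hsub unfolding subgroupoid_def by blast
lemma objsH: "objs G \<subseteq> H" using Hwide unfolding wide_def .

lemma Msub: "subgroupoid (mor G) G"
  unfolding subgroupoid_def using mors by blast

lemma GL:
  assumes l: "l \<in> mor G" and k: "k \<in> mor G"
  shows "(\<Sum>i<m. bt l (x i) * bt k (y i)) = (if l = k then e l else 0)"
proof (cases "tgt G l = tgt G k")
  case True
  have li: "ginv G l \<in> mor G" using l by (rule inv_mor)
  have c: "src G (ginv G l) = tgt G k" using True l by simp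
  have lk: "cmp G (ginv G l) k \<in> mor G" using cmp_mor[OF li k c] .
  have "(\<Sum>i<m. bt l (x i) * bt k (y i)) = (\<Sum>i<m. bt l (x i * (bt (cmp G (ginv G l) k) (y i) * e (ginv G l))))"
    using bt_move[OF l] bt_comp[OF li k c] l by simp
  also have "\<dots> = bt l ((\<Sum>i<m. x i * bt (cmp G (ginv G l) k) (y i)) * e (ginv G l))"
    by (simp add: bt_sum[OF l] sum_distrib_right mult.assoc)
  also have "\<dots> = bt l ((if cmp G (ginv G l) k \<in> objs G then e (cmp G (ginv G l) k) else 0) * e (ginv G l))"
    using gal[OF lk] by simp
  also have "\<dots> = (if l = k then e l else 0)"
  proof (cases "l = k")
    case True
    then show ?thesis using cmp_obj_iff[OF l k] l bt_e[OF l, of 1] bt_one[OF l]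
      by (simp add: src_obj mult.commute[of "e (src G l)"])
  next
    case False
    then show ?thesis using cmp_obj_iff[OF l k] True l by simp
  qed
  finally show ?thesis .
next
  case False
  then show ?thesis using e_mult_orth[OF l k False] by auto
qed

lemma expand:
  assumes K: "K \<subseteq> mor G" "objs G \<subseteq> K"
  shows "(\<Sum>i<m. x i * tr K (y i * s)) = s"
proof -
  have finK: "finite K" using K fin finite_subset by blast
  have "(\<Sum>i<m. x i * tr K (y i * s)) = (\<Sum>h\<in>K. (\<Sum>i<m. x i * bt h (y i)) * bt h s)"
    unfolding tr_def using K
    by (simp add: sum_distrib_left sum_distrib_right bt_mult subset_iff ac_simps sum.swap[of _ K])
  also have "\<dots> = (\<Sum>h\<in>K. if h \<in> objs G then e h * bt h s else 0)"
    by (rule sum.cong) (use K gal in auto)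
  also have "\<dots> = (\<Sum>h\<in>objs G. e h * s)"
    using K finK by (simp add: sum.If_cases Int_absorb1 bt_obj ac_simps obj_mor)
  also have "\<dots> = s" using sum_one by (simp add: sum_distrib_right[symmetric])
  finally show ?thesis .
qed

abbreviation T where "T \<equiv> fixring G e \<alpha> H"
abbreviation R where "R \<equiv> fixring G e \<alpha> (mor G)"

lemma one_expand: "(\<Sum>i<m. x i * tr H (y i)) = 1"
  using expand[OF Hm objsH, of 1] by simp

lemma part_ii: "fixing G e \<alpha> (mor G) T = H"
proof
  show "H \<subseteq> fixing G e \<alpha> (mor G) T"
    using Hm unfolding fixing_def fixring_def by auto
next
  show "fixing G e \<alpha> (mor G) T \<subseteq> H"
  proof
    fix \<sigma> assume s: "\<sigma> \<in> fixing G e \<alpha> (mor G) T"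
    then have sm: "\<sigma> \<in> mor G" and fx: "\<And>t. t \<in> T \<Longrightarrow> bt \<sigma> t = t * e \<sigma>"
      unfolding fixing_def bt_def by auto
    show "\<sigma> \<in> H"
    proof (rule ccontr)
      assume nH: "\<sigma> \<notin> H"
      have "e \<sigma> = bt \<sigma> (\<Sum>i<m. x i * tr H (y i))" using one_expand bt_one[OF sm] by simp
      also have "\<dots> = (\<Sum>i<m. bt \<sigma> (x i) * (tr H (y i) * e \<sigma>))"
        by (simp add: bt_sum[OF sm] bt_mult[OF sm] fx tr_fix[OF Hsub])
      also have "\<dots> = (\<Sum>h\<in>H. (\<Sum>i<m. bt \<sigma> (x i) * bt h (y i)) * e \<sigma>)"
        unfolding tr_def by (simp add: sum_distrib_left sum_distrib_right ac_simps sum.swap[of _ H])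
      also have "\<dots> = 0" using GL[OF sm] Hm nH by (auto intro!: sum.neutral)
      finally show False using nz[OF sm] by simp
    qed
  qed
qed

lemma inv_cmp_cancel:
  assumes h: "h \<in> mor G" and k: "k \<in> mor G" and c: "src G h = tgt G k"
  shows "cmp G (ginv G (cmp G h k)) h = ginv G k"
proof -
  have ki: "ginv G k \<in> mor G" "ginv G h \<in> mor G" using h k by (auto intro: inv_mor)
  have "cmp G (ginv G (cmp G h k)) h = cmp G (cmp G (ginv G k) (ginv G h)) h" using inv_cmp[OF h k c] by simp
  also have "\<dots> = cmp G (ginv G k) (cmp G (ginv G h) h)" using assoc[OF ki(1) ki(2) h] h k c by simp
  also have "\<dots> = ginv G k" using h k c by (metis cmp_src_right inv_left ki(1) src_inv)
  finally show ?thesis .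
qed

lemma strong_aux:
  assumes g: "g \<in> mor G" and h: "h \<in> mor G" and ss: "src G g = src G h" and tt: "tgt G g = tgt G h"
    and nH: "cmp G (ginv G g) h \<notin> H" and eps: "\<epsilon> \<in> Sid e g"
    and eq: "\<And>t. t \<in> T \<Longrightarrow> bt g (t * e (src G g)) * \<epsilon> = bt h (t * e (src G g)) * \<epsilon>"
  shows "\<epsilon> = 0"
proof -
  have "\<epsilon> = e g * \<epsilon>" using eps g by (simp add: Sid_iff mult.commute)
  also have "\<dots> = bt g (\<Sum>i<m. x i * tr H (y i)) * \<epsilon>" using one_expand bt_one[OF g] by simp
  also have "\<dots> = (\<Sum>i<m. bt g (x i) * (bt g (tr H (y i)) * \<epsilon>))"
    by (simp add: bt_sum[OF g] bt_mult[OF g] sum_distrib_right mult.assoc)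
  also have "\<dots> = (\<Sum>i<m. bt g (x i) * (bt h (tr H (y i)) * \<epsilon>))"
  proof (rule sum.cong[OF refl])
    fix i
    have "bt g (tr H (y i)) * \<epsilon> = bt g (tr H (y i) * e (src G g)) * \<epsilon>" using bt_e_src[OF g] by simp
    also have "\<dots> = bt h (tr H (y i) * e (src G g)) * \<epsilon>" using eq tr_fix[OF Hsub] by blast
    also have "\<dots> = bt h (tr H (y i)) * \<epsilon>" using bt_e_src[OF h] ss by simp
    finally show "bt g (x i) * (bt g (tr H (y i)) * \<epsilon>) = bt g (x i) * (bt h (tr H (y i)) * \<epsilon>)" by simp
  qed
  also have "\<dots> = (\<Sum>k\<in>H. (\<Sum>i<m. bt g (x i) * bt h (bt k (y i)))) * \<epsilon>"
    unfolding tr_def by (simp add: bt_sum[OF h] sum_distrib_left sum_distrib_right ac_simps sum.swap[of _ H])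
  also have "\<dots> = 0"
  proof -
    have "(\<Sum>i<m. bt g (x i) * bt h (bt k (y i))) = 0" if k: "k \<in> H" for k
    proof -
      have km: "k \<in> mor G" using k Hm by blast
      show ?thesis
      proof (cases "src G h = tgt G k")
        case True
        have hk: "cmp G h k \<in> mor G" using cmp_mor[OF h km True] .
        have "g \<noteq> cmp G h k"
        proof
          assume "g = cmp G h k"
          then have "cmp G (ginv G g) h = ginv G k" using inv_cmp_cancel[OF h km True] by simp
          then show False using nH Hi[OF k] by simp
        qed
        then have "(\<Sum>i<m. bt g (x i) * bt h (bt k (y i))) = (\<Sum>i<m. bt g (x i) * bt (cmp G h k) (y i)) * e h"
          using bt_comp[OF h km True] by (simp add: sum_distrib_right mult.assoc)
        also have "\<dots> = 0" using GL[OF g hk] \<open>g \<noteq> cmp G h k\<close> by simp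
        finally show ?thesis .
      next
        case False
        then show ?thesis using bt_noncomp[OF h km False] by simp
      qed
    qed
    then show ?thesis by simp
  qed
  finally show ?thesis .
qed

lemma part_strong: "alpha_strong G e \<alpha> T"
  unfolding alpha_strong_def
proof (intro ballI impI allI)
  fix yo z g h \<epsilon>
  assume yo: "yo \<in> objs G" and z: "z \<in> objs G" and g: "g \<in> hom G yo z" and h: "h \<in> hom G yo z"
    and nf: "cmp G (ginv G g) h \<notin> fixing G e \<alpha> (hom G yo yo) {t * e yo |t. t \<in> T}"
    and ep: "\<epsilon> * \<epsilon> = \<epsilon> \<and> \<epsilon> \<noteq> 0 \<and> \<epsilon> \<in> Sid e g \<union> Sid e h"
  have gm: "g \<in> mor G" "src G g = yo" "tgt G g = z" using g unfolding hom_def by auto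
  have hm: "h \<in> mor G" "src G h = yo" "tgt G h = z" using h unfolding hom_def by auto
  define \<rho> where "\<rho> = cmp G (ginv G g) h"
  have c1: "src G (ginv G g) = tgt G h" using gm hm by simp
  have \<rho>m: "\<rho> \<in> mor G" unfolding \<rho>_def using cmp_mor[OF inv_mor[OF gm(1)] hm(1) c1] .
  have \<rho>s: "src G \<rho> = yo" unfolding \<rho>_def using gm hm c1 by (simp add: inv_mor)
  have \<rho>t: "tgt G \<rho> = yo" unfolding \<rho>_def using gm hm c1 by (simp add: inv_mor)
  have nH: "\<rho> \<notin> H"
  proof
    assume rH: "\<rho> \<in> H"
    have "\<rho> \<in> fixing G e \<alpha> (hom G yo yo) {t * e yo |t. t \<in> T}"
      unfolding fixing_def
    proof (intro CollectI conjI ballI)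
      show "\<rho> \<in> hom G yo yo" unfolding hom_def using \<rho>m \<rho>s \<rho>t by simp
      fix b assume "b \<in> {t * e yo |t. t \<in> T}"
      then obtain t where t: "t \<in> T" "b = t * e yo" by blast
      have "\<alpha> \<rho> (b * e (ginv G \<rho>)) = bt \<rho> (t * e (src G \<rho>))" unfolding bt_def using t \<rho>s by simp
      also have "\<dots> = t * e \<rho>" using bt_e_src[OF \<rho>m] t rH by (simp add: fixring_iff)
      also have "\<dots> = b * e \<rho>" using t e_tgt[OF \<rho>m] \<rho>t by (simp add: ac_simps)
      finally show "\<alpha> \<rho> (b * e (ginv G \<rho>)) = b * e \<rho>" .
    qed
    then show False using nf \<rho>_def by simp
  qed
  show "\<exists>ty\<in>{t * e yo |t. t \<in> T}. \<alpha> g (ty * e (ginv G g)) * \<epsilon> \<noteq> \<alpha> h (ty * e (ginv G h)) * \<epsilon>"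
  proof (rule ccontr)
    assume "\<not> ?thesis"
    then have eq: "\<And>t. t \<in> T \<Longrightarrow> bt g (t * e yo) * \<epsilon> = bt h (t * e yo) * \<epsilon>"
      unfolding bt_def by blast
    have "\<epsilon> = 0"
    proof (cases "\<epsilon> \<in> Sid e g")
      case True
      show ?thesis by (rule strong_aux[OF gm(1) hm(1) _ _ _ True]) (use gm hm nH \<rho>_def eq in auto)
    next
      case False
      then have eh: "\<epsilon> \<in> Sid e h" using ep by blast
      have nH2: "cmp G (ginv G h) g \<notin> H"
      proof
        assume "cmp G (ginv G h) g \<in> H"
        moreover have "ginv G \<rho> = cmp G (ginv G h) g"
          unfolding \<rho>_def using inv_cmp[OF inv_mor[OF gm(1)] hm(1) c1] gm by simp
        ultimately have "ginv G (ginv G \<rho>) \<in> H" using Hi by metis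
        then show False using nH \<rho>m by simp
      qed
      show ?thesis by (rule strong_aux[OF hm(1) gm(1) _ _ nH2 eh]) (use gm hm eq in auto)
    qed
    then show False using ep by simp
  qed
qed

end




lemma subring_diff: "subring_of T \<Longrightarrow> a \<in> T \<Longrightarrow> b \<in> T \<Longrightarrow> a - b \<in> T"
  unfolding subring_of_def by (metis diff_conv_add_uminus)
lemma subring_add: "subring_of T \<Longrightarrow> a \<in> T \<Longrightarrow> b \<in> T \<Longrightarrow> a + b \<in> T"
  unfolding subring_of_def by blast
lemma subring_mult: "subring_of T \<Longrightarrow> a \<in> T \<Longrightarrow> b \<in> T \<Longrightarrow> a * b \<in> T"
  unfolding subring_of_def by blast
lemma subring_one: "subring_of T \<Longrightarrow> 1 \<in> T"
  unfolding subring_of_def by blast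

lemma nakayama:
  fixes g :: "nat \<Rightarrow> 'a::comm_ring_1"
  assumes T: "subring_of T" and IT: "I \<subseteq> T" and I0: "0 \<in> I"
    and Iadd: "\<And>a b. a \<in> I \<Longrightarrow> b \<in> I \<Longrightarrow> a + b \<in> I"
    and Imul: "\<And>a t. a \<in> I \<Longrightarrow> t \<in> T \<Longrightarrow> a * t \<in> I"
  shows "(\<forall>k<n. g k \<in> T) \<Longrightarrow> (\<forall>k<n. \<exists>A. (\<forall>j<n. A j \<in> I) \<and> g k = (\<Sum>j<n. A j * g j))
     \<Longrightarrow> \<exists>a\<in>I. \<forall>k<n. (1 - a) * g k = 0"
proof (induction n arbitrary: g)
  case 0
  then show ?case using I0 by auto
next
  case (Suc n)
  have "\<forall>k. \<exists>A. k < Suc n \<longrightarrow> (\<forall>j<Suc n. A j \<in> I) \<and> g k = (\<Sum>j<Suc n. A j * g j)"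
    using Suc.prems(2) by blast
  then obtain A where A: "\<And>k. k < Suc n \<Longrightarrow> (\<forall>j<Suc n. A k j \<in> I) \<and> g k = (\<Sum>j<Suc n. A k j * g j)"
    by metis
  have AI: "\<And>k j. k < Suc n \<Longrightarrow> j < Suc n \<Longrightarrow> A k j \<in> I" using A by blast
  have Aeq: "\<And>k. k < Suc n \<Longrightarrow> g k = (\<Sum>j<n. A k j * g j) + A k n * g n"
  proof -
    fix k assume "k < Suc n"
    then have "g k = (\<Sum>j<Suc n. A k j * g j)" using A by blast
    then show "g k = (\<Sum>j<n. A k j * g j) + A k n * g n" by (simp only: sum.lessThan_Suc)
  qed
  have IT': "\<And>a. a \<in> I \<Longrightarrow> a \<in> T" using IT by blast
  define c where "c = A n n"
  define u where "u = 1 - c"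
  have cI: "c \<in> I" unfolding c_def using AI[of n n] by simp
  have uT: "u \<in> T" unfolding u_def using subring_diff[OF T subring_one[OF T] IT'[OF cI]] .
  define h where "h k = u * g k" for k
  define B where "B k j = A k j * u + A k n * A n j + (if j = k then c else 0)" for k j
  have S2: "(\<Sum>j<n. A n j * g j) = u * g n"
  proof -
    have "(\<Sum>j<n. A n j * g j) = g n - c * g n" using Aeq[of n] unfolding c_def by (metis add_diff_cancel_right' lessI)
    also have "\<dots> = u * g n" unfolding u_def by (simp add: algebra_simps)
    finally show ?thesis .
  qed
  have hT: "\<forall>k<n. h k \<in> T" unfolding h_def using Suc.prems(1) uT subring_mult[OF T] by simp
  have hB: "\<forall>k<n. \<exists>A. (\<forall>j<n. A j \<in> I) \<and> h k = (\<Sum>j<n. A j * h j)"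
  proof (intro allI impI)
    fix k assume k: "k < n"
    have "\<forall>j<n. B k j \<in> I"
    proof (intro allI impI)
      fix j assume j: "j < n"
      have a1: "A k j \<in> I" "A k n \<in> I" "A n j \<in> I" using AI j k by auto
      have "A k j * u \<in> I" using Imul[OF a1(1) uT] .
      moreover have "A k n * A n j \<in> I" using Imul[OF a1(2) IT'[OF a1(3)]] .
      moreover have "(if j = k then c else 0) \<in> I" using cI I0 by simp
      ultimately show "B k j \<in> I" unfolding B_def using Iadd by simp
    qed
    have S1: "(\<Sum>j<n. A k j * g j) = g k - A k n * g n"
      using Aeq[of k] k by (metis add_diff_cancel_right' less_SucI)
    have "(\<Sum>j<n. B k j * h j) = (\<Sum>j<n. (u * u) * (A k j * g j) + (A k n * u) * (A n j * g j) + (if j = k then c * h j else 0))"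
      unfolding B_def h_def by (rule sum.cong) (auto simp: algebra_simps)
    also have "\<dots> = (u * u) * (\<Sum>j<n. A k j * g j) + (A k n * u) * (\<Sum>j<n. A n j * g j) + c * h k"
      using k by (simp add: sum.distrib sum_distrib_left)
    also have "\<dots> = h k" unfolding S1 S2 h_def u_def by (simp add: algebra_simps)
    finally have "h k = (\<Sum>j<n. B k j * h j)" by simp
    then show "\<exists>A. (\<forall>j<n. A j \<in> I) \<and> h k = (\<Sum>j<n. A j * h j)" using \<open>\<forall>j<n. B k j \<in> I\<close> by blast
  qed
  obtain b where bI: "b \<in> I" and hb: "\<forall>k<n. (1 - b) * h k = 0"
    using Suc.IH[OF hT hB] by blast
  define a' where "a' = 1 - (1 - b) * u * u"
  have "a' = b + c * ((1 - b) * (1 + u))" unfolding a'_def u_def by (simp add: algebra_simps)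
  moreover have "(1 - b) * (1 + u) \<in> T"
    using subring_mult[OF T subring_diff[OF T subring_one[OF T] IT'[OF bI]] subring_add[OF T subring_one[OF T] uT]] .
  ultimately have a'I: "a' \<in> I" using Iadd[OF bI Imul[OF cI]] by simp
  have "\<forall>k<Suc n. (1 - a') * g k = 0"
  proof (intro allI impI)
    fix k assume k: "k < Suc n"
    show "(1 - a') * g k = 0"
    proof (cases "k < n")
      case True
      have "(1 - a') * g k = u * ((1 - b) * h k)" unfolding a'_def h_def by (simp add: ac_simps)
      then show ?thesis using hb True by simp
    next
      case False
      then have kn: "k = n" using k by simp
      have "(1 - a') * g n = (1 - b) * u * (\<Sum>j<n. A n j * g j)" unfolding a'_def S2 by (simp add: ac_simps)
      also have "\<dots> = (\<Sum>j<n. A n j * ((1 - b) * h j))" unfolding h_def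
        by (simp add: sum_distrib_left ac_simps)
      also have "\<dots> = 0" using hb by simp
      finally show ?thesis using kn by simp
    qed
  qed
  then show ?case using a'I by blast
qed

context GP begin
lemma cmp_cancel_right: "g \<in> mor G \<Longrightarrow> h \<in> mor G \<Longrightarrow> src G g = tgt G h \<Longrightarrow> cmp G (cmp G g h) (ginv G h) = g"
proof -
  assume a: "g \<in> mor G" "h \<in> mor G" "src G g = tgt G h"
  have "cmp G (cmp G g h) (ginv G h) = cmp G g (cmp G h (ginv G h))"
    using assoc[OF a(1,2) inv_mor[OF a(2)] a(3)] a by simp
  also have "\<dots> = g" using a by (metis inv_right cmp_src_right)
  finally show ?thesis .
qed
end




context PG begin

lemma T_sub: "subring_of T" using fixring_subring[OF Hm] .
lemma R_sub: "subring_of R" using fixring_subring[of "mor G"] by simp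
lemma RT: "R \<subseteq> T" using Hm unfolding fixring_def by blast

lemma trH_T: "tr H s \<in> T" using tr_fix[OF Hsub] .
lemma trG_R: "tr (mor G) s \<in> R" using tr_fix[OF Msub] .

lemma tr_expand: "tr H s = (\<Sum>j<m. tr H (y j * s) * tr H (x j))"
proof -
  have "tr H s = tr H (\<Sum>j<m. x j * tr H (y j * s))" using expand[OF Hm objsH, of s] by simp
  also have "\<dots> = (\<Sum>j<m. tr H (tr H (y j * s) * x j))" by (simp add: tr_sum[OF Hm] ac_simps)
  also have "\<dots> = (\<Sum>j<m. tr H (y j * s) * tr H (x j))" using tr_linear[OF Hm trH_T] by simp
  finally show ?thesis .
qed

lemma trace_one: "\<exists>c. tr H c = 1"
proof -
  define I where "I = range (tr H)"
  define g where "g k = tr H (x k)" for k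
  define A where "A k j = tr H (\<Sum>i<m. tr H (y i) * (y j * x k * x i))" for k j
  have IT: "I \<subseteq> T" unfolding I_def using trH_T by blast
  have "tr H 0 = 0" unfolding tr_def using Hm by (auto intro!: sum.neutral)
  then have I0: "0 \<in> I" unfolding I_def by (metis rangeI)
  have Iadd: "a + b \<in> I" if ab: "a \<in> I" "b \<in> I" for a b
  proof -
    obtain s1 s2 where "a = tr H s1" "b = tr H s2" using ab unfolding I_def by blast
    then have "a + b = tr H (s1 + s2)" using tr_add[OF Hm] by simp
    then show ?thesis unfolding I_def by simp
  qed
  have Imul: "a * t \<in> I" if at: "a \<in> I" "t \<in> T" for a t
  proof -
    obtain s1 where "a = tr H s1" using at unfolding I_def by blast
    then have "a * t = tr H (t * s1)" using tr_linear[OF Hm at(2)] by (simp add: mult.commute)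
    then show ?thesis unfolding I_def by simp
  qed
  have gT: "\<forall>k<m. g k \<in> T" unfolding g_def using trH_T by blast
  have gA: "\<forall>k<m. \<exists>B. (\<forall>j<m. B j \<in> I) \<and> g k = (\<Sum>j<m. B j * g j)"
  proof (intro allI impI)
    fix k assume k: "k < m"
    have "g k = tr H (x k * (\<Sum>i<m. x i * tr H (y i)))" unfolding g_def using one_expand by simp
    also have "\<dots> = (\<Sum>i<m. tr H (tr H (y i) * (x k * x i)))" by (simp add: tr_sum[OF Hm] sum_distrib_left ac_simps)
    also have "\<dots> = (\<Sum>i<m. tr H (y i) * tr H (x k * x i))" by (simp add: tr_linear[OF Hm trH_T])
    also have "\<dots> = (\<Sum>i<m. tr H (y i) * (\<Sum>j<m. tr H (y j * (x k * x i)) * g j))"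
    proof -
      have E: "\<And>i. tr H (x k * x i) = (\<Sum>j<m. tr H (y j * (x k * x i)) * g j)"
        unfolding g_def using tr_expand by blast
      show ?thesis by (simp only: E)
    qed
    also have "\<dots> = (\<Sum>j<m. A k j * g j)"
    proof -
      have Aeq: "A k j = (\<Sum>i<m. tr H (y i) * tr H (y j * (x k * x i)))" for j
        unfolding A_def using tr_linear[OF Hm trH_T] by (simp add: tr_sum[OF Hm] mult.assoc)
      have "(\<Sum>j<m. A k j * g j) = (\<Sum>j<m. \<Sum>i<m. tr H (y i) * (tr H (y j * (x k * x i)) * g j))"
        using Aeq by (simp add: sum_distrib_right mult.assoc)
      also have "\<dots> = (\<Sum>i<m. \<Sum>j<m. tr H (y i) * (tr H (y j * (x k * x i)) * g j))" by (rule sum.swap)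
      also have "\<dots> = (\<Sum>i<m. tr H (y i) * (\<Sum>j<m. tr H (y j * (x k * x i)) * g j))"
        by (simp add: sum_distrib_left)
      finally show ?thesis by simp
    qed
    finally have "g k = (\<Sum>j<m. A k j * g j)" .
    moreover have "\<forall>j<m. A k j \<in> I" unfolding I_def A_def by blast
    ultimately show "\<exists>B. (\<forall>j<m. B j \<in> I) \<and> g k = (\<Sum>j<m. B j * g j)" by blast
  qed
  obtain a where aI: "a \<in> I" and ag: "\<forall>k<m. (1 - a) * g k = 0"
    using nakayama[OF T_sub IT I0 Iadd Imul gT gA] by blast
  have "1 - a = (1 - a) * (\<Sum>i<m. x i * tr H (y i))" using one_expand by simp
  also have "\<dots> = (\<Sum>i<m. x i * (\<Sum>j<m. tr H (y j * y i) * ((1 - a) * g j)))"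
  proof -
    have E: "\<And>i. tr H (y i) = (\<Sum>j<m. tr H (y j * y i) * g j)"
      unfolding g_def using tr_expand by (metis mult_1_right)
    show ?thesis by (simp only: E) (simp add: sum_distrib_left sum_distrib_right ac_simps)
  qed
  also have "\<dots> = 0" using ag by simp
  finally have "a = 1" by simp
  then show ?thesis using aI unfolding I_def by auto
qed

definition c0 where "c0 = (SOME c. tr H c = 1)"
definition sa where "sa i = tr H (c0 * x i)"
definition sb where "sb i = tr H (y i)"

lemma c0: "tr H c0 = 1" unfolding c0_def using trace_one by (rule someI_ex)
lemma saT: "sa i \<in> T" unfolding sa_def by (rule trH_T)
lemma sbT: "sb i \<in> T" unfolding sb_def by (rule trH_T)

lemma S1: "(\<Sum>i<m. sa i * sb i) = 1"
proof -
  have "(\<Sum>i<m. sa i * sb i) = (\<Sum>i<m. tr H (tr H (y i) * (c0 * x i)))"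
  proof (rule sum.cong[OF refl])
    fix i show "sa i * sb i = tr H (tr H (y i) * (c0 * x i))"
      unfolding sa_def sb_def using tr_linear[OF Hm trH_T[of "y i"], of "c0 * x i"] by (simp add: mult.commute)
  qed
  also have "\<dots> = tr H (c0 * (\<Sum>i<m. x i * tr H (y i)))"
    by (simp add: tr_sum[OF Hm] sum_distrib_left ac_simps)
  also have "\<dots> = 1" using one_expand c0 by simp
  finally show ?thesis .
qed

lemma S2: "t \<in> T \<Longrightarrow> t = (\<Sum>j<m. sa j * tr (mor G) (y j * t))"
proof -
  assume t: "t \<in> T"
  have RT': "tr (mor G) s \<in> T" for s using trG_R RT by blast
  have "(\<Sum>j<m. sa j * tr (mor G) (y j * t)) = (\<Sum>j<m. tr H (tr (mor G) (y j * t) * (c0 * x j)))"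
  proof (rule sum.cong[OF refl])
    fix j show "sa j * tr (mor G) (y j * t) = tr H (tr (mor G) (y j * t) * (c0 * x j))"
      unfolding sa_def using tr_linear[OF Hm RT'[of "y j * t"], of "c0 * x j"] by (simp add: mult.commute)
  qed
  also have "\<dots> = tr H (c0 * (\<Sum>j<m. x j * tr (mor G) (y j * t)))"
    by (simp add: tr_sum[OF Hm] sum_distrib_left ac_simps)
  also have "(\<Sum>j<m. x j * tr (mor G) (y j * t)) = t"
    using expand[of "mor G" t] obj_mor by blast
  also have "tr H (c0 * t) = t" using tr_linear[OF Hm t, of c0] c0 by (simp add: mult.commute)
  finally show ?thesis by simp
qed

lemma Lg:
  assumes g: "g \<in> mor G"
  shows "(\<Sum>i<m. bt g (sa i) * sb i) = (if g \<in> H then e g else 0)"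
proof (cases "g \<in> H")
  case True
  have "(\<Sum>i<m. bt g (sa i) * sb i) = e g * (\<Sum>i<m. sa i * sb i)"
    using True saT by (simp add: fixring_iff sum_distrib_left ac_simps)
  then show ?thesis using S1 True by simp
next
  case False
  have inner: "(\<Sum>i<m. bt g (bt h (c0 * x i)) * bt k (y i)) = 0" if h: "h \<in> H" and k: "k \<in> H" for h k
  proof -
    have hm: "h \<in> mor G" and km: "k \<in> mor G" using h k Hm by auto
    show ?thesis
    proof (cases "src G g = tgt G h")
      case True
      have ghm: "cmp G g h \<in> mor G" using cmp_mor[OF g hm True] .
      have ne: "cmp G g h \<noteq> k"
      proof
        assume gh: "cmp G g h = k"
        have "g = cmp G (cmp G g h) (ginv G h)" using cmp_cancel_right[OF g hm True] by simp
        also have "\<dots> \<in> H"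
        proof -
          have "src G k = src G h" using gh g hm True src_cmp by metis
          then show ?thesis using gh Hc[OF k Hi[OF h]] hm by simp
        qed
        finally show False using False by simp
      qed
      have "(\<Sum>i<m. bt g (bt h (c0 * x i)) * bt k (y i))
          = bt (cmp G g h) c0 * e g * (\<Sum>i<m. bt (cmp G g h) (x i) * bt k (y i))"
        using bt_comp[OF g hm True] bt_mult[OF ghm] by (simp add: sum_distrib_left ac_simps)
      also have "\<dots> = 0" using GL[OF ghm km] ne by simp
      finally show ?thesis .
    next
      case False
      then show ?thesis using bt_noncomp[OF g hm False] by simp
    qed
  qed
  have "(\<Sum>i<m. bt g (sa i) * sb i) = (\<Sum>i<m. \<Sum>h\<in>H. \<Sum>k\<in>H. bt g (bt h (c0 * x i)) * bt k (y i))"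
    unfolding sa_def sb_def tr_def by (simp add: bt_sum[OF g] sum_product)
  also have "\<dots> = (\<Sum>h\<in>H. \<Sum>i<m. \<Sum>k\<in>H. bt g (bt h (c0 * x i)) * bt k (y i))" by (rule sum.swap)
  also have "\<dots> = (\<Sum>h\<in>H. \<Sum>k\<in>H. \<Sum>i<m. bt g (bt h (c0 * x i)) * bt k (y i))"
    by (rule sum.cong[OF refl], rule sum.swap)
  also have "\<dots> = 0" using inner by simp
  finally show ?thesis using False by simp
qed

lemma S3: "t \<in> T \<Longrightarrow> (\<Sum>i<m. tr (mor G) (y j * t * sa i) * sb i) = sb j * t"
proof -
  assume t: "t \<in> T"
  have "(\<Sum>i<m. tr (mor G) (y j * t * sa i) * sb i) = (\<Sum>i<m. \<Sum>g\<in>mor G. bt g (y j * t) * (bt g (sa i) * sb i))"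
    unfolding tr_def sum_distrib_right
    by (intro sum.cong[OF refl]) (simp add: bt_mult mult.assoc)
  also have "\<dots> = (\<Sum>g\<in>mor G. \<Sum>i<m. bt g (y j * t) * (bt g (sa i) * sb i))" by (rule sum.swap)
  also have "\<dots> = (\<Sum>g\<in>mor G. if g \<in> H then bt g (y j * t) * e g else 0)"
    by (rule sum.cong[OF refl]) (simp add: sum_distrib_left[symmetric] Lg)
  also have "\<dots> = (\<Sum>g\<in>H. bt g (y j * t))"
    using Hm fin by (simp add: sum.inter_restrict[symmetric] Int_absorb1 bt_range subset_iff)
  also have "\<dots> = tr H (t * y j)" unfolding tr_def by (simp add: mult.commute)
  also have "\<dots> = sb j * t" unfolding sb_def using tr_linear[OF Hm t, of "y j"] by (simp add: mult.commute)
  finally show ?thesis .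
qed

end




abbreviation sg :: "'a \<times> 'a \<Rightarrow> 'a ftens" where "sg p \<equiv> Poly_Mapping.single p (1::int)"

lemma keys_sum_ext:
  fixes \<phi> :: "'k \<Rightarrow> int \<Rightarrow> 'b::comm_monoid_add"
  assumes "finite A" "Poly_Mapping.keys f \<subseteq> A" "\<And>p. \<phi> p 0 = 0"
  shows "(\<Sum>p\<in>Poly_Mapping.keys f. \<phi> p (Poly_Mapping.lookup f p)) = (\<Sum>p\<in>A. \<phi> p (Poly_Mapping.lookup f p))"
proof (rule sum.mono_neutral_left)
  show "\<forall>i\<in>A - Poly_Mapping.keys f. \<phi> i (Poly_Mapping.lookup f i) = 0"
  proof
    fix i assume "i \<in> A - Poly_Mapping.keys f"
    then have "Poly_Mapping.lookup f i = 0" by (simp add: in_keys_iff)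
    then show "\<phi> i (Poly_Mapping.lookup f i) = 0" using assms(3) by simp
  qed
qed (use assms in auto)

lemma keys_sum_add:
  fixes \<phi> :: "'k \<Rightarrow> int \<Rightarrow> 'b::comm_monoid_add"
  assumes z: "\<And>p. \<phi> p 0 = 0" and a: "\<And>p u v. \<phi> p (u + v) = \<phi> p u + \<phi> p v"
  shows "(\<Sum>p\<in>Poly_Mapping.keys (f + g). \<phi> p (Poly_Mapping.lookup (f + g) p)) =
         (\<Sum>p\<in>Poly_Mapping.keys f. \<phi> p (Poly_Mapping.lookup f p)) + (\<Sum>p\<in>Poly_Mapping.keys g. \<phi> p (Poly_Mapping.lookup g p))"
proof -
  let ?A = "Poly_Mapping.keys f \<union> Poly_Mapping.keys g"
  have fA: "finite ?A" by simp
  have "(\<Sum>p\<in>Poly_Mapping.keys (f + g). \<phi> p (Poly_Mapping.lookup (f + g) p)) = (\<Sum>p\<in>?A. \<phi> p (Poly_Mapping.lookup (f + g) p))"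
    by (rule keys_sum_ext[where \<phi>=\<phi>, OF fA keys_add[of f g] z])
  also have "\<dots> = (\<Sum>p\<in>?A. \<phi> p (Poly_Mapping.lookup f p)) + (\<Sum>p\<in>?A. \<phi> p (Poly_Mapping.lookup g p))"
    by (simp add: lookup_add a sum.distrib)
  also have "(\<Sum>p\<in>?A. \<phi> p (Poly_Mapping.lookup f p)) = (\<Sum>p\<in>Poly_Mapping.keys f. \<phi> p (Poly_Mapping.lookup f p))"
    by (rule keys_sum_ext[where \<phi>=\<phi>, OF fA _ z, symmetric]) auto
  also have "(\<Sum>p\<in>?A. \<phi> p (Poly_Mapping.lookup g p)) = (\<Sum>p\<in>Poly_Mapping.keys g. \<phi> p (Poly_Mapping.lookup g p))"
    by (rule keys_sum_ext[where \<phi>=\<phi>, OF fA _ z, symmetric]) auto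
  finally show ?thesis .
qed

lemma tens_mult_add: "tens_mult (f + g) = tens_mult f + tens_mult g"
  unfolding tens_mult_def by (rule keys_sum_add) (auto simp: distrib_right)

lemma tens_lact_add: "tens_lact t (f + g) = tens_lact t f + tens_lact t g"
  unfolding tens_lact_def by (rule keys_sum_add) (auto simp: single_add)

lemma tens_ract_add: "tens_ract (f + g) t = tens_ract f t + tens_ract g t"
  unfolding tens_ract_def by (rule keys_sum_add) (auto simp: single_add)

lemma tens_mult_sg: "tens_mult (sg p) = fst p * snd p" unfolding tens_mult_def by simp
lemma tens_lact_sg: "tens_lact t (sg p) = sg (t * fst p, snd p)" unfolding tens_lact_def by simp
lemma tens_ract_sg: "tens_ract (sg p) t = sg (fst p, snd p * t)" unfolding tens_ract_def by simp

lemma tens_mult_zero: "tens_mult 0 = 0" unfolding tens_mult_def by simp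
lemma tens_lact_zero: "tens_lact t 0 = 0" unfolding tens_lact_def by simp
lemma tens_ract_zero: "tens_ract 0 t = 0" unfolding tens_ract_def by simp

lemma tens_mult_sum: "tens_mult (\<Sum>i\<in>A. f i) = (\<Sum>i\<in>A. tens_mult (f i))"
  by (induction A rule: infinite_finite_induct) (auto simp: tens_mult_add tens_mult_zero)
lemma tens_lact_sum: "tens_lact t (\<Sum>i\<in>A. f i) = (\<Sum>i\<in>A. tens_lact t (f i))"
  by (induction A rule: infinite_finite_induct) (auto simp: tens_lact_add tens_lact_zero)
lemma tens_ract_sum: "tens_ract (\<Sum>i\<in>A. f i) t = (\<Sum>i\<in>A. tens_ract (f i) t)"
  by (induction A rule: infinite_finite_induct) (auto simp: tens_ract_add tens_ract_zero)

lemma tens_lact_diff: "tens_lact t (f - g) = tens_lact t f - tens_lact t g"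
  using tens_lact_add[of t "f - g" g] by (simp add: eq_diff_eq)

lemma tz_add: "u \<in> tens_zero R T \<Longrightarrow> v \<in> tens_zero R T \<Longrightarrow> u + v \<in> tens_zero R T"
  using tzd[OF _ tzd[OF tz0, of v]] by (metis diff_0 diff_minus_eq_add)
lemma tz_neg: "u \<in> tens_zero R T \<Longrightarrow> - u \<in> tens_zero R T"
  using tzd[OF tz0, of u] by simp
lemma tz_sum: "(\<And>i. i \<in> A \<Longrightarrow> f i \<in> tens_zero R T) \<Longrightarrow> (\<Sum>i\<in>A. f i) \<in> tens_zero R T"
  by (induction A rule: infinite_finite_induct) (auto intro: tz0 tz_add)

definition teq where "teq R T u v \<longleftrightarrow> u - v \<in> tens_zero R T"
lemma teq_refl: "teq R T u u" unfolding teq_def by (simp add: tz0)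
lemma teq_sym: "teq R T u v \<Longrightarrow> teq R T v u" unfolding teq_def using tz_neg by fastforce
lemma teq_trans[trans]: "teq R T u v \<Longrightarrow> teq R T v w \<Longrightarrow> teq R T u w"
  unfolding teq_def using tz_add by fastforce
lemma teq_sum: "(\<And>i. i \<in> A \<Longrightarrow> teq R T (f i) (g i)) \<Longrightarrow> teq R T (\<Sum>i\<in>A. f i) (\<Sum>i\<in>A. g i)"
  unfolding teq_def using tz_sum[of A "\<lambda>i. f i - g i"] by (simp add: sum_subtractf)

lemma lact_tz:
  assumes T: "subring_of T" and t: "t \<in> T"
  shows "u \<in> tens_zero R T \<Longrightarrow> tens_lact t u \<in> tens_zero R T"
proof (induction rule: tens_zero.induct)
  case tz0
  then show ?case by (simp add: tens_lact_zero tens_zero.tz0)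
next
  case (tzl x x' y)
  then show ?case using tens_zero.tzl[of "t * x" T "t * x'" y R] subring_mult[OF T t]
    by (simp add: tens_lact_diff tens_lact_sg distrib_left)
next
  case (tzr x y y')
  then show ?case using tens_zero.tzr[of "t * x" T y y' R] subring_mult[OF T t]
    by (simp add: tens_lact_diff tens_lact_sg)
next
  case (tzb r x y)
  then show ?case using tens_zero.tzb[of r R "t * x" T y] subring_mult[OF T t]
    by (simp add: tens_lact_diff tens_lact_sg ac_simps)
next
  case (tzd u v)
  then show ?case by (simp add: tens_lact_diff tens_zero.tzd)
qed

lemma sg_zero_tz: "subring_of T \<Longrightarrow> y \<in> T \<Longrightarrow> sg (0, y) \<in> tens_zero R T"
proof -
  assume T: "subring_of T" and y: "y \<in> T"
  have z: "0 \<in> T" using subring_diff[OF T subring_one[OF T] subring_one[OF T]] by simp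
  have "sg (0 + 0, y) - sg (0, y) - sg (0, y) \<in> tens_zero R T" by (rule tzl[OF z z y])
  then show ?thesis using tz_neg by fastforce
qed

lemma sg_zero_tz2: "subring_of T \<Longrightarrow> x \<in> T \<Longrightarrow> sg (x, 0) \<in> tens_zero R T"
proof -
  assume T: "subring_of T" and x: "x \<in> T"
  have z: "0 \<in> T" using subring_diff[OF T subring_one[OF T] subring_one[OF T]] by simp
  have "sg (x, 0 + 0) - sg (x, 0) - sg (x, 0) \<in> tens_zero R T" by (rule tzr[OF x z z])
  then show ?thesis using tz_neg by fastforce
qed

lemma subring_sum: "subring_of T \<Longrightarrow> (\<And>i. i \<in> A \<Longrightarrow> f i \<in> T) \<Longrightarrow> (\<Sum>i\<in>A. f i) \<in> T"
proof (induction A rule: infinite_finite_induct)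
  case (infinite A)
  then show ?case using subring_diff[OF _ subring_one subring_one] by fastforce
next
  case empty
  then show ?case using subring_diff[OF _ subring_one subring_one] by fastforce
next
  case (insert x F)
  then show ?case using subring_add by fastforce
qed

lemma TL:
  assumes T: "subring_of T" and y: "y \<in> T"
  shows "(\<And>j. j \<in> A \<Longrightarrow> u j \<in> T) \<Longrightarrow> teq R T (sg (\<Sum>j\<in>A. u j, y)) (\<Sum>j\<in>A. sg (u j, y))"
proof (induction A rule: infinite_finite_induct)
  case (infinite A)
  then show ?case using sg_zero_tz[OF T y] unfolding teq_def by simp
next
  case empty
  then show ?case using sg_zero_tz[OF T y] unfolding teq_def by simp
next
  case (insert x F)
  have S: "(\<Sum>j\<in>F. u j) \<in> T" using subring_sum[OF T] insert by blast
  have ux: "u x \<in> T" using insert by blast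
  have "sg (u x + (\<Sum>j\<in>F. u j), y) - sg (u x, y) - sg (\<Sum>j\<in>F. u j, y) \<in> tens_zero R T"
    by (rule tzl[OF ux S y])
  moreover have "sg (\<Sum>j\<in>F. u j, y) - (\<Sum>j\<in>F. sg (u j, y)) \<in> tens_zero R T"
    using insert unfolding teq_def by blast
  ultimately have "(sg (u x + (\<Sum>j\<in>F. u j), y) - sg (u x, y) - sg (\<Sum>j\<in>F. u j, y))
     + (sg (\<Sum>j\<in>F. u j, y) - (\<Sum>j\<in>F. sg (u j, y))) \<in> tens_zero R T" by (rule tz_add)
  then show ?case using insert unfolding teq_def by (simp add: algebra_simps)
qed

lemma TR:
  assumes T: "subring_of T" and x: "x \<in> T"
  shows "(\<And>j. j \<in> A \<Longrightarrow> u j \<in> T) \<Longrightarrow> teq R T (sg (x, \<Sum>j\<in>A. u j)) (\<Sum>j\<in>A. sg (x, u j))"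
proof (induction A rule: infinite_finite_induct)
  case (infinite A)
  then show ?case using sg_zero_tz2[OF T x] unfolding teq_def by simp
next
  case empty
  then show ?case using sg_zero_tz2[OF T x] unfolding teq_def by simp
next
  case (insert z F)
  have S: "(\<Sum>j\<in>F. u j) \<in> T" using subring_sum[OF T] insert by blast
  have uz: "u z \<in> T" using insert by blast
  have "sg (x, u z + (\<Sum>j\<in>F. u j)) - sg (x, u z) - sg (x, \<Sum>j\<in>F. u j) \<in> tens_zero R T"
    by (rule tzr[OF x uz S])
  moreover have "sg (x, \<Sum>j\<in>F. u j) - (\<Sum>j\<in>F. sg (x, u j)) \<in> tens_zero R T"
    using insert unfolding teq_def by blast
  ultimately have "(sg (x, u z + (\<Sum>j\<in>F. u j)) - sg (x, u z) - sg (x, \<Sum>j\<in>F. u j))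
     + (sg (x, \<Sum>j\<in>F. u j) - (\<Sum>j\<in>F. sg (x, u j))) \<in> tens_zero R T" by (rule tz_add)
  then show ?case using insert unfolding teq_def by (simp add: algebra_simps)
qed

lemma central:
  fixes a b :: "nat \<Rightarrow> 'a::comm_ring_1" and r :: "nat \<Rightarrow> 'a \<Rightarrow> 'a"
  assumes T: "subring_of T" and RT: "R \<subseteq> T"
    and aT: "\<And>i. a i \<in> T" and bT: "\<And>i. b i \<in> T"
    and rR: "\<And>j t. t \<in> T \<Longrightarrow> r j t \<in> R"
    and exp: "\<And>t. t \<in> T \<Longrightarrow> t = (\<Sum>j<m. a j * r j t)"
    and S3: "\<And>j t. t \<in> T \<Longrightarrow> (\<Sum>i<m. r j (t * a i) * b i) = b j * t"
    and s: "s \<in> T"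
  shows "teq R T (\<Sum>i<m. sg (s * a i, b i)) (\<Sum>i<m. sg (a i, b i * s))"
proof -
  have saT: "s * a i \<in> T" for i using subring_mult[OF T s aT] .
  have rT: "r j (s * a i) \<in> T" for i j using rR[OF saT] RT by blast
  have t1: "teq R T (\<Sum>i<m. sg (s * a i, b i)) (\<Sum>i<m. \<Sum>j<m. sg (a j * r j (s * a i), b i))"
  proof (rule teq_sum)
    fix i
    have "sg (s * a i, b i) = sg (\<Sum>j<m. a j * r j (s * a i), b i)" using exp[OF saT] by simp
    then show "teq R T (sg (s * a i, b i)) (\<Sum>j<m. sg (a j * r j (s * a i), b i))"
      using TL[OF T bT, of "{..<m}" "\<lambda>j. a j * r j (s * a i)" R] subring_mult[OF T aT rT] by simp
  qed
  have t2: "teq R T (\<Sum>i<m. \<Sum>j<m. sg (a j * r j (s * a i), b i)) (\<Sum>i<m. \<Sum>j<m. sg (a j, r j (s * a i) * b i))"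
  proof (rule teq_sum, rule teq_sum)
    fix i j
    have "sg (r j (s * a i) * a j, b i) - sg (a j, r j (s * a i) * b i) \<in> tens_zero R T"
      by (rule tzb[OF rR[OF saT] aT bT])
    then show "teq R T (sg (a j * r j (s * a i), b i)) (sg (a j, r j (s * a i) * b i))"
      unfolding teq_def by (simp add: mult.commute)
  qed
  have e3: "(\<Sum>i<m. \<Sum>j<m. sg (a j, r j (s * a i) * b i)) = (\<Sum>j<m. \<Sum>i<m. sg (a j, r j (s * a i) * b i))"
    by (rule sum.swap)
  have t4: "teq R T (\<Sum>j<m. \<Sum>i<m. sg (a j, r j (s * a i) * b i)) (\<Sum>j<m. sg (a j, \<Sum>i<m. r j (s * a i) * b i))"
  proof (rule teq_sum)
    fix j
    show "teq R T (\<Sum>i<m. sg (a j, r j (s * a i) * b i)) (sg (a j, \<Sum>i<m. r j (s * a i) * b i))"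
      using TR[OF T aT, of "{..<m}" "\<lambda>i. r j (s * a i) * b i" R] subring_mult[OF T rT bT]
      by (rule_tac teq_sym) simp
  qed
  have e5: "(\<Sum>j<m. sg (a j, \<Sum>i<m. r j (s * a i) * b i)) = (\<Sum>j<m. sg (a j, b j * s))"
    using S3[OF s] by simp
  have "teq R T (\<Sum>i<m. sg (s * a i, b i)) (\<Sum>j<m. sg (a j, \<Sum>i<m. r j (s * a i) * b i))"
    using teq_trans[OF teq_trans[OF t1 t2] t4[folded e3]] .
  then show ?thesis using e5 by simp
qed




lemma sep_from:
  fixes a b :: "nat \<Rightarrow> 'a::comm_ring_1"
  assumes R: "subring_of R" and T: "subring_of T" and RT: "R \<subseteq> T"
    and aT: "\<And>i. a i \<in> T" and bT: "\<And>i. b i \<in> T"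
    and S1: "(\<Sum>i<m. a i * b i) = 1"
    and cent: "\<And>s. s \<in> T \<Longrightarrow> teq R T (\<Sum>i<m. sg (s * a i, b i)) (\<Sum>i<m. sg (a i, b i * s))"
  shows "separable_over R T"
  unfolding separable_over_def
proof (intro conjI R T RT exI[of _ "\<lambda>t. \<Sum>i<m. sg (t * a i, b i)"] ballI)
  fix t u assume t: "t \<in> T" and u: "u \<in> T"
  show "Poly_Mapping.keys (\<Sum>i<m. sg (t * a i, b i)) \<subseteq> T \<times> T"
    using keys_sum[of "\<lambda>i. sg (t * a i, b i)" "{..<m}"] subring_mult[OF T t aT] bT by auto
  show "tens_mult (\<Sum>i<m. sg (t * a i, b i)) = t"
    using S1 by (simp add: tens_mult_sum tens_mult_sg sum_distrib_left[symmetric] mult.assoc)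
  show "tens_eq R T (\<Sum>i<m. sg ((t + u) * a i, b i)) ((\<Sum>i<m. sg (t * a i, b i)) + (\<Sum>i<m. sg (u * a i, b i)))"
  proof -
    have "(\<Sum>i<m. sg ((t + u) * a i, b i)) - ((\<Sum>i<m. sg (t * a i, b i)) + (\<Sum>i<m. sg (u * a i, b i)))
       = (\<Sum>i<m. sg (t * a i + u * a i, b i) - sg (t * a i, b i) - sg (u * a i, b i))"
      by (simp add: sum_subtractf sum.distrib distrib_right algebra_simps)
    also have "\<dots> \<in> tens_zero R T"
      by (rule tz_sum, rule tzl) (use subring_mult[OF T t aT] subring_mult[OF T u aT] bT in auto)
    finally show ?thesis unfolding tens_eq_def .
  qed
  show "tens_eq R T (\<Sum>i<m. sg (t * u * a i, b i)) (tens_lact t (\<Sum>i<m. sg (u * a i, b i)))"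
    unfolding tens_eq_def by (simp add: tens_lact_sum tens_lact_sg mult.assoc tz0)
  show "tens_eq R T (\<Sum>i<m. sg (t * u * a i, b i)) (tens_ract (\<Sum>i<m. sg (t * a i, b i)) u)"
  proof -
    have "tens_lact t ((\<Sum>i<m. sg (u * a i, b i)) - (\<Sum>i<m. sg (a i, b i * u))) \<in> tens_zero R T"
      using lact_tz[OF T t] cent[OF u] unfolding teq_def by blast
    then show ?thesis unfolding tens_eq_def
      by (simp add: tens_lact_diff tens_lact_sum tens_lact_sg tens_ract_sum tens_ract_sg mult.assoc)
  qed
qed

theorem proposition5p5:
  fixes G :: "'g groupoid" and e :: "'g \<Rightarrow> 'a::comm_ring_1" and \<alpha> :: "'g \<Rightarrow> 'a \<Rightarrow> 'a"
    and H :: "'g set"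
  assumes "groupoid G" and "finite (mor G)" and "connected_groupoid G"
    and "unital_partial_action G e \<alpha>" and "group_type G e (mor G)"
    and "direct_sum_objs G e"
    and "\<forall>g\<in>mor G. e g \<noteq> 0"
    and "partial_galois G e \<alpha>"
    and "H \<in> wSub G e"
  shows "separable_over (fixring G e \<alpha> (mor G)) (fixring G e \<alpha> H)
       \<and> alpha_strong G e \<alpha> (fixring G e \<alpha> H)
       \<and> fixing G e \<alpha> (mor G) (fixring G e \<alpha> H) = H"
proof -
  interpret PA G e \<alpha>
    by (unfold_locales) (use assms in auto)
  obtain m :: nat and x y where gal: "\<forall>g\<in>mor G. (\<Sum>i<m. x i * \<alpha> g (y i * e (ginv G g))) = (if g \<in> objs G then e g else 0)"
    using assms(8) unfolding partial_galois_def by blast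
  interpret PG G e \<alpha> m x y H
  proof (unfold_locales)
    show "\<And>g. g \<in> mor G \<Longrightarrow> (\<Sum>i<m. x i * bt g (y i)) = (if g \<in> objs G then e g else 0)"
      using gal unfolding bt_def by blast
    show "\<And>g. g \<in> mor G \<Longrightarrow> e g \<noteq> 0" using assms(7) by blast
    show "subgroupoid H G" "wide H G" using assms(9) unfolding wSub_def by auto
  qed
  have sep: "separable_over R T"
  proof (rule sep_from[OF R_sub T_sub RT saT sbT S1])
    fix s assume s: "s \<in> T"
    show "teq R T (\<Sum>i<m. sg (s * sa i, sb i)) (\<Sum>i<m. sg (sa i, sb i * s))"
    proof (rule central[OF T_sub RT saT sbT, where r = "\<lambda>j t. tr (mor G) (y j * t)"])
      show "\<And>j t. t \<in> T \<Longrightarrow> tr (mor G) (y j * t) \<in> R" using trG_R by blast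
      show "\<And>t. t \<in> T \<Longrightarrow> t = (\<Sum>j<m. sa j * tr (mor G) (y j * t))" using S2 by blast
      show "\<And>j t. t \<in> T \<Longrightarrow> (\<Sum>i<m. tr (mor G) (y j * (t * sa i)) * sb i) = sb j * t"
        using S3 by (simp add: mult.assoc[symmetric])
      show "s \<in> T" by (rule s)
    qed
  qed
  show ?thesis using sep part_strong part_ii by blast
qed



end
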